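(* Let $\lambda>0$ not be a fusion value, let $\lambda_1$ and $C_1,\dots,C_K$ be as in the context, and let $(\hat{\mathbf x}_1,\dots,\hat{\mathbf x}_K)$ be the minimizer of (R$_\lambda$). Assume vectors $\boldsymbol\delta'_{ij}\in\mathbb R^d$ are given for all $i<j$ lying in a common cluster $C_k$, with $\|\boldsymbol\delta'_{ij}\|\le\lambda_1$ and $\mathbf a_i-\bar{\mathbf a}_k=-\sum_{j\in C_k}r_j\boldsymbol\delta'_{\langle ij\rangle}$ for all $i\in C_k$, $k\in[K]$. Define: $\mathbf x^*_i:=\hat{\mathbf x}_k$ for $i\in C_k$; $\mathbf y_{ij}:=\mathbf x_i^*-\mathbf x_j^*$; $\mathbf z_i:=\mathbf x_i^*-\mathbf a_i$; $s_i:=\frac12(1+\|\mathbf z_i\|^2)$; $u_i:=\frac12(-1+\|\mathbf z_i\|^2)$; $t_{ij}:=\|\mathbf y_{ij}\|$; $\boldsymbol\delta_{ij}:=\boldsymbol\delta'_{ij}$ if $i,j$ lie in the same cluster and $\boldsymbol\delta_{ij}:=\lambda\frac{\mathbf x_j^*-\mathbf x_i^*}{\|\mathbf x_j^*-\mathbf x_i^*\|}$ otherwise; $\boldsymbol\beta_i:=-\mathbf z_i$; $\gamma_i:=\frac12(1-\|\boldsymbol\beta_i\|^2)$. Then this is an optimal primal–dual pair for (P-SOCP)/(D-SOCP) at $\lambda$.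
   Context: Data: $n\ge2$, $d\ge1$, $\mathbf a_i\in\mathbb R^d$, $r_i>0$. For $\lambda\ge0$, (P$_\lambda$): minimize $\frac12\sum_ir_i\|\mathbf x_i-\mathbf a_i\|^2+\lambda\sum_{i<j}r_ir_j\|\mathbf x_i-\mathbf x_j\|$; unique minimizer $\mathbf x^*(\lambda)$, whose clusters are the classes of $i\sim j\iff\mathbf x_i^*(\lambda)=\mathbf x_j^*(\lambda)$. $\lambda_0>0$ is a fusion value if some $i\ne j$ have $\mathbf x_i^*(\lambda_0)=\mathbf x_j^*(\lambda_0)$ but $\mathbf x_i^*(\lambda)\ne\mathbf x_j^*(\lambda)$ for all $\lambda<\lambda_0$. $\lambda_1$ is the largest fusion value below $\lambda$ (or $0$), and $C_1,\dots,C_K$ are the clusters of $\mathbf x^*(\lambda_1)$ (singletons if $\lambda_1=0$). $r'_k:=\sum_{i\in C_k}r_i$, $\bar{\mathbf a}_k:=\frac1{r'_k}\sum_{i\in C_k}r_i\mathbf a_i$; (R$_\lambda$): minimize $\frac12\sum_kr'_k\|\mathbf x_k-\bar{\mathbf a}_k\|^2+\lambda\sum_{k<k'}r'_kr'_{k'}\|\mathbf x_k-\mathbf x_{k'}\|$ over $(\mathbb R^d)^K$. Antisymmetric notation $\mathbf v_{\langle ij\rangle}=\mathbf v_{ij}$ ($i<j$), $-\mathbf v_{ji}$ ($i>j$), $\mathbf 0$ ($i=j$). (P-SOCP): minimize $\sum_ir_is_i+\lambda\sum_{i<j}r_ir_jt_{ij}$ s.t. $\mathbf y_{ij}=\mathbf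 x_i-\mathbf x_j$, $\mathbf z_i=\mathbf x_i-\mathbf a_i$, $s_i=u_i+1$, $t_{ij}\ge\|\mathbf y_{ij}\|$, $s_i\ge\|(\mathbf z_i,u_i)\|$. (D-SOCP): maximize $\sum_ir_i\mathbf a_i^T\boldsymbol\beta_i+\sum_ir_i\gamma_i$ s.t. $\sum_jr_j\boldsymbol\delta_{\langle ij\rangle}+\boldsymbol\beta_i=\mathbf 0$, $\|\boldsymbol\delta_{ij}\|\le\lambda$, $1-\gamma_i\ge\|(\boldsymbol\beta_i,\gamma_i)\|$. *)

theory Defs
  imports "HOL-Analysis.Analysis"
begin

text \<open>Points are indexed by 0..n-1; vectors live in an arbitrary Euclidean space 'a
  (of dimension d = DIM('a) \<ge> 1).\<close>

definition Pobj :: "nat \<Rightarrow> (nat \<Rightarrow> real) \<Rightarrow> (nat \<Rightarrow> 'a::euclidean_space) \<Rightarrow> real \<Rightarrow> (nat \<Rightarrow> 'a) \<Rightarrow> real" where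
  "Pobj n r a lam x =
     (1/2) * (\<Sum>i<n. r i * (norm (x i - a i))\<^sup>2)
     + lam * (\<Sum>i<n. \<Sum>j\<in>{i<..<n}. r i * r j * norm (x i - x j))"

text \<open>The (unique) minimizer of (P_lambda); values at indices \<ge> n are normalised to 0.\<close>
definition xstar :: "nat \<Rightarrow> (nat \<Rightarrow> real) \<Rightarrow> (nat \<Rightarrow> 'a::euclidean_space) \<Rightarrow> real \<Rightarrow> (nat \<Rightarrow> 'a)" where
  "xstar n r a lam = (THE x. (\<forall>i\<ge>n. x i = 0) \<and>
      (\<forall>y. (\<forall>i\<ge>n. y i = 0) \<longrightarrow> Pobj n r a lam x \<le> Pobj n r a lam y))"

definition fusion_value :: "nat \<Rightarrow> (nat \<Rightarrow> real) \<Rightarrow> (nat \<Rightarrow> 'a::euclidean_space) \<Rightarrow> real \<Rightarrow> bool" where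
  "fusion_value n r a lam0 \<longleftrightarrow> lam0 > 0 \<and>
     (\<exists>i<n. \<exists>j<n. i \<noteq> j \<and> xstar n r a lam0 i = xstar n r a lam0 j \<and>
        (\<forall>lam. 0 \<le> lam \<and> lam < lam0 \<longrightarrow> xstar n r a lam i \<noteq> xstar n r a lam j))"

definition lam1 :: "nat \<Rightarrow> (nat \<Rightarrow> real) \<Rightarrow> (nat \<Rightarrow> 'a::euclidean_space) \<Rightarrow> real \<Rightarrow> real" where
  "lam1 n r a lam = (if {mu. fusion_value n r a mu \<and> mu < lam} = {} then 0
                     else Max {mu. fusion_value n r a mu \<and> mu < lam})"

text \<open>Clusters of x*(mu); singletons if mu = 0 (convention of the paper).\<close>
definition clusters :: "nat \<Rightarrow> (nat \<Rightarrow> real) \<Rightarrow> (nat \<Rightarrow> 'a::euclidean_space) \<Rightarrow> real \<Rightarrow> nat set set" where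
  "clusters n r a mu = (if mu = 0 then (\<lambda>i. {i}) ` {..<n}
     else {..<n} // {(i, j). i < n \<and> j < n \<and> xstar n r a mu i = xstar n r a mu j})"

definition rprime :: "(nat \<Rightarrow> real) \<Rightarrow> nat set \<Rightarrow> real" where
  "rprime r C = (\<Sum>i\<in>C. r i)"

definition abar :: "(nat \<Rightarrow> real) \<Rightarrow> (nat \<Rightarrow> 'a::euclidean_space) \<Rightarrow> nat set \<Rightarrow> 'a" where
  "abar r a C = (1 / rprime r C) *\<^sub>R (\<Sum>i\<in>C. r i *\<^sub>R a i)"

definition Robj :: "(nat \<Rightarrow> real) \<Rightarrow> (nat \<Rightarrow> 'a::euclidean_space) \<Rightarrow> (nat \<Rightarrow> nat set) \<Rightarrow> nat \<Rightarrow> real \<Rightarrow> (nat \<Rightarrow> 'a) \<Rightarrow> real" where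
  "Robj r a C K lam x =
     (1/2) * (\<Sum>k<K. rprime r (C k) * (norm (x k - abar r a (C k)))\<^sup>2)
     + lam * (\<Sum>k<K. \<Sum>k'\<in>{k<..<K}. rprime r (C k) * rprime r (C k') * norm (x k - x k'))"

definition anti :: "(nat \<Rightarrow> nat \<Rightarrow> 'a::real_vector) \<Rightarrow> nat \<Rightarrow> nat \<Rightarrow> 'a" where
  "anti v i j = (if i < j then v i j else if j < i then - v j i else 0)"

definition psocp_feasible :: "nat \<Rightarrow> (nat \<Rightarrow> 'a::euclidean_space) \<Rightarrow> (nat \<Rightarrow> 'a) \<Rightarrow> (nat \<Rightarrow> nat \<Rightarrow> 'a)
    \<Rightarrow> (nat \<Rightarrow> 'a) \<Rightarrow> (nat \<Rightarrow> real) \<Rightarrow> (nat \<Rightarrow> real) \<Rightarrow> (nat \<Rightarrow> nat \<Rightarrow> real) \<Rightarrow> bool" where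
  "psocp_feasible n a x y z s u t \<longleftrightarrow>
     (\<forall>i<n. \<forall>j<n. i < j \<longrightarrow> y i j = x i - x j \<and> t i j \<ge> norm (y i j)) \<and>
     (\<forall>i<n. z i = x i - a i \<and> s i = u i + 1 \<and> s i \<ge> norm (z i, u i))"

definition psocp_obj :: "nat \<Rightarrow> (nat \<Rightarrow> real) \<Rightarrow> real \<Rightarrow> (nat \<Rightarrow> real) \<Rightarrow> (nat \<Rightarrow> nat \<Rightarrow> real) \<Rightarrow> real" where
  "psocp_obj n r lam s t = (\<Sum>i<n. r i * s i) + lam * (\<Sum>i<n. \<Sum>j\<in>{i<..<n}. r i * r j * t i j)"

definition psocp_optimal :: "nat \<Rightarrow> (nat \<Rightarrow> real) \<Rightarrow> (nat \<Rightarrow> 'a::euclidean_space) \<Rightarrow> real \<Rightarrow> (nat \<Rightarrow> 'a) \<Rightarrow> (nat \<Rightarrow> nat \<Rightarrow> 'a)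
    \<Rightarrow> (nat \<Rightarrow> 'a) \<Rightarrow> (nat \<Rightarrow> real) \<Rightarrow> (nat \<Rightarrow> real) \<Rightarrow> (nat \<Rightarrow> nat \<Rightarrow> real) \<Rightarrow> bool" where
  "psocp_optimal n r a lam x y z s u t \<longleftrightarrow> psocp_feasible n a x y z s u t \<and>
     (\<forall>x' y' z' s' u' t'. psocp_feasible n a x' y' z' s' u' t' \<longrightarrow>
        psocp_obj n r lam s t \<le> psocp_obj n r lam s' t')"

definition dsocp_feasible :: "nat \<Rightarrow> (nat \<Rightarrow> real) \<Rightarrow> real \<Rightarrow> (nat \<Rightarrow> nat \<Rightarrow> 'a::euclidean_space)
    \<Rightarrow> (nat \<Rightarrow> 'a) \<Rightarrow> (nat \<Rightarrow> real) \<Rightarrow> bool" where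
  "dsocp_feasible n r lam delta beta gamma \<longleftrightarrow>
     (\<forall>i<n. (\<Sum>j<n. r j *\<^sub>R anti delta i j) + beta i = 0) \<and>
     (\<forall>i<n. \<forall>j<n. i < j \<longrightarrow> norm (delta i j) \<le> lam) \<and>
     (\<forall>i<n. 1 - gamma i \<ge> norm (beta i, gamma i))"

definition dsocp_obj :: "nat \<Rightarrow> (nat \<Rightarrow> real) \<Rightarrow> (nat \<Rightarrow> 'a::euclidean_space) \<Rightarrow> (nat \<Rightarrow> 'a) \<Rightarrow> (nat \<Rightarrow> real) \<Rightarrow> real" where
  "dsocp_obj n r a beta gamma = (\<Sum>i<n. r i * (a i \<bullet> beta i)) + (\<Sum>i<n. r i * gamma i)"

definition dsocp_optimal :: "nat \<Rightarrow> (nat \<Rightarrow> real) \<Rightarrow> (nat \<Rightarrow> 'a::euclidean_space) \<Rightarrow> real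
    \<Rightarrow> (nat \<Rightarrow> nat \<Rightarrow> 'a) \<Rightarrow> (nat \<Rightarrow> 'a) \<Rightarrow> (nat \<Rightarrow> real) \<Rightarrow> bool" where
  "dsocp_optimal n r a lam delta beta gamma \<longleftrightarrow> dsocp_feasible n r lam delta beta gamma \<and>
     (\<forall>delta' beta' gamma'. dsocp_feasible n r lam delta' beta' gamma' \<longrightarrow>
        dsocp_obj n r a beta' gamma' \<le> dsocp_obj n r a beta gamma)"

end

theory Submission
  imports Defs
begin


lemma anti_swap: "anti v j i = - anti v i j" by (auto simp: anti_def)
lemma anti_same[simp]: "anti v i i = 0" by (simp add: anti_def)

definition Dsum :: "nat \<Rightarrow> (nat\<Rightarrow>real) \<Rightarrow> (nat \<Rightarrow> 'a::euclidean_space) \<Rightarrow> real" where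
  "Dsum n r x = (\<Sum>i<n. \<Sum>j\<in>{i<..<n}. r i * r j * norm (x i - x j))"

definition wv :: "nat \<Rightarrow> (nat\<Rightarrow>real) \<Rightarrow> (nat \<Rightarrow> nat \<Rightarrow> 'a::euclidean_space) \<Rightarrow> nat \<Rightarrow> 'a" where
  "wv n r d i = (\<Sum>j<n. r j *\<^sub>R anti d i j)"

definition cert :: "nat \<Rightarrow> (nat\<Rightarrow>real) \<Rightarrow> (nat \<Rightarrow> 'a::euclidean_space) \<Rightarrow> real \<Rightarrow> (nat \<Rightarrow> nat \<Rightarrow> 'a) \<Rightarrow> (nat \<Rightarrow> 'a) \<Rightarrow> bool" where
  "cert n r a mu d xh \<longleftrightarrow> (\<forall>i<n. \<forall>j<n. i<j \<longrightarrow> norm (d i j) \<le> mu \<and> mu * norm (xh j - xh i) \<le> d i j \<bullet> (xh j - xh i))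
     \<and> (\<forall>i<n. xh i - a i = wv n r d i)"

lemma Pobj_alt: "Pobj n r a mu x = (1/2) * (\<Sum>i<n. r i * (norm (x i - a i))\<^sup>2) + mu * Dsum n r x"
  by (simp add: Pobj_def Dsum_def)

lemma double_sum_split:
  fixes F :: "nat \<Rightarrow> nat \<Rightarrow> 'b::comm_monoid_add"
  shows "(\<Sum>i<n. \<Sum>j<n. F i j) = (\<Sum>i<n. \<Sum>j\<in>{i<..<n}. F i j + F j i) + (\<Sum>i<n. F i i)"
proof (induction n)
  case 0 then show ?case by simp
next
  case (Suc n)
  have e: "\<And>i. i < n \<Longrightarrow> {i<..<Suc n} = insert n {i<..<n}" by auto
  have "(\<Sum>i<Suc n. \<Sum>j\<in>{i<..<Suc n}. F i j + F j i) = (\<Sum>i<n. \<Sum>j\<in>{i<..<Suc n}. F i j + F j i)"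
  proof -
    have "{n<..<Suc n} = {}" by auto
    then show ?thesis by simp
  qed
  also have "\<dots> = (\<Sum>i<n. (F i n + F n i) + (\<Sum>j\<in>{i<..<n}. F i j + F j i))"
    by (rule sum.cong) (auto simp: e)
  also have "\<dots> = (\<Sum>i<n. F i n) + (\<Sum>i<n. F n i) + (\<Sum>i<n. \<Sum>j\<in>{i<..<n}. F i j + F j i)"
    by (simp add: sum.distrib)
  finally have h: "(\<Sum>i<Suc n. \<Sum>j\<in>{i<..<Suc n}. F i j + F j i) = (\<Sum>i<n. F i n) + (\<Sum>i<n. F n i) + (\<Sum>i<n. \<Sum>j\<in>{i<..<n}. F i j + F j i)" .
  have "(\<Sum>i<Suc n. \<Sum>j<Suc n. F i j) = (\<Sum>i<n. \<Sum>j<Suc n. F i j) + (\<Sum>j<Suc n. F n j)" by simp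
  also have "\<dots> = (\<Sum>i<n. (\<Sum>j<n. F i j) + F i n) + ((\<Sum>j<n. F n j) + F n n)" by simp
  also have "\<dots> = (\<Sum>i<n. \<Sum>j<n. F i j) + (\<Sum>i<n. F i n) + ((\<Sum>j<n. F n j) + F n n)" by (simp add: sum.distrib)
  finally have h2: "(\<Sum>i<Suc n. \<Sum>j<Suc n. F i j) = (\<Sum>i<n. \<Sum>j<n. F i j) + (\<Sum>i<n. F i n) + ((\<Sum>j<n. F n j) + F n n)" .
  have h3: "(\<Sum>i<Suc n. F i i) = (\<Sum>i<n. F i i) + F n n" by simp
  show ?case unfolding h2 h3 h Suc.IH by (simp only: ac_simps)
qed

lemma anti_sum_identity:
  "(\<Sum>i<n. r i * (v i \<bullet> wv n r d i)) = (\<Sum>i<n. \<Sum>j\<in>{i<..<n}. r i * r j * (d i j \<bullet> (v i - v j)))"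
proof -
  define F where "F i j = r i * r j * (v i \<bullet> anti d i j)" for i j
  have "(\<Sum>i<n. r i * (v i \<bullet> wv n r d i)) = (\<Sum>i<n. \<Sum>j<n. F i j)"
    by (simp add: wv_def F_def inner_sum_right sum_distrib_left mult.assoc)
  also have "\<dots> = (\<Sum>i<n. \<Sum>j\<in>{i<..<n}. F i j + F j i) + (\<Sum>i<n. F i i)"
    by (rule double_sum_split)
  also have "\<dots> = (\<Sum>i<n. \<Sum>j\<in>{i<..<n}. r i * r j * (d i j \<bullet> (v i - v j)))"
    by (auto intro!: sum.cong simp: F_def anti_def inner_diff_right inner_commute algebra_simps)
  finally show ?thesis .
qed

lemma antisym_zero:
  fixes d :: "nat \<Rightarrow> nat \<Rightarrow> 'a::euclidean_space"
  shows "(\<Sum>i\<in>A. \<Sum>j\<in>A. (r i * r j) *\<^sub>R anti d i j) = 0"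
proof -
  define S where "S = (\<Sum>i\<in>A. \<Sum>j\<in>A. (r i * r j) *\<^sub>R anti d i j)"
  have "S = (\<Sum>j\<in>A. \<Sum>i\<in>A. (r i * r j) *\<^sub>R anti d i j)" unfolding S_def by (rule sum.swap)
  also have "\<dots> = (\<Sum>j\<in>A. \<Sum>i\<in>A. - ((r j * r i) *\<^sub>R anti d j i))"
  proof (intro sum.cong refl)
    fix j i
    have "anti d i j = - anti d j i" by (rule anti_swap)
    then show "(r i * r j) *\<^sub>R anti d i j = - ((r j * r i) *\<^sub>R anti d j i)" by (simp add: mult.commute)
  qed
  also have "\<dots> = - S" unfolding S_def by (simp add: sum_negf)
  finally have "S = - S" .
  then have "S + S = - S + S" by (rule arg_cong)
  then have "S + S = 0" by (simp only: add.left_inverse)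
  then have "2 *\<^sub>R S = 0" by (simp only: scaleR_2)
  then have "S = 0" by simp
  then show ?thesis unfolding S_def by simp
qed

lemma cs_lower: fixes d u :: "'a::euclidean_space" assumes "norm d \<le> mu"
  shows "- (mu * norm u) \<le> d \<bullet> u"
proof -
  have "\<bar>d \<bullet> u\<bar> \<le> norm d * norm u" by (rule Cauchy_Schwarz_ineq2)
  also have "\<dots> \<le> mu * norm u" by (rule mult_right_mono[OF assms]) simp
  finally show ?thesis by linarith
qed

lemma norm_add_sq: fixes p q :: "'a::real_inner"
  shows "(norm (p + q))\<^sup>2 = (norm p)\<^sup>2 + 2 * (p \<bullet> q) + (norm q)\<^sup>2"
  by (simp add: power2_norm_eq_inner inner_add_left inner_add_right inner_commute)

lemma cert_ineq:
  assumes c: "cert n r a mu d xh" and rpos: "\<forall>i<n. r i > 0"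
  shows "Pobj n r a mu xh + (1/2) * (\<Sum>i<n. r i * (norm (x i - xh i))\<^sup>2) \<le> Pobj n r a mu x"
proof -
  have e1: "(norm (x i - a i))\<^sup>2 = (norm (x i - xh i))\<^sup>2 + 2 * ((x i - xh i) \<bullet> (xh i - a i)) + (norm (xh i - a i))\<^sup>2" for i
    using norm_add_sq[of "x i - xh i" "xh i - a i"] by simp
  have e2: "(\<Sum>i<n. r i * ((x i - xh i) \<bullet> (xh i - a i))) = (\<Sum>i<n. \<Sum>j\<in>{i<..<n}. r i * r j * (d i j \<bullet> ((x i - xh i) - (x j - xh j))))"
  proof -
    have "(\<Sum>i<n. r i * ((x i - xh i) \<bullet> (xh i - a i))) = (\<Sum>i<n. r i * ((x i - xh i) \<bullet> wv n r d i))"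
      using c unfolding cert_def by (intro sum.cong) auto
    also have "\<dots> = (\<Sum>i<n. \<Sum>j\<in>{i<..<n}. r i * r j * (d i j \<bullet> ((x i - xh i) - (x j - xh j))))" by (rule anti_sum_identity)
    finally show ?thesis .
  qed
  have e3: "(\<Sum>i<n. \<Sum>j\<in>{i<..<n}. r i * r j * (d i j \<bullet> ((x i - xh i) - (x j - xh j))))
        \<ge> (\<Sum>i<n. \<Sum>j\<in>{i<..<n}. r i * r j * (mu * norm (xh i - xh j) - mu * norm (x i - x j)))"
  proof (intro sum_mono)
    fix i j assume i: "i \<in> {..<n}" and j: "j \<in> {i<..<n}"
    then have ij: "i < n" "j < n" "i < j" by auto
    have nd: "norm (d i j) \<le> mu" and cc: "mu * norm (xh j - xh i) \<le> d i j \<bullet> (xh j - xh i)"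
      using c ij unfolding cert_def by auto
    have "d i j \<bullet> ((x i - xh i) - (x j - xh j)) = d i j \<bullet> (x i - x j) + d i j \<bullet> (xh j - xh i)"
      by (simp add: inner_diff_right algebra_simps)
    moreover have "- (mu * norm (x i - x j)) \<le> d i j \<bullet> (x i - x j)" by (rule cs_lower[OF nd])
    moreover have "mu * norm (xh i - xh j) \<le> d i j \<bullet> (xh j - xh i)" using cc by (simp add: norm_minus_commute)
    ultimately have "mu * norm (xh i - xh j) - mu * norm (x i - x j) \<le> d i j \<bullet> ((x i - xh i) - (x j - xh j))"
      by linarith
    moreover have "r i * r j \<ge> 0" using rpos ij by (simp add: less_imp_le)
    ultimately show "r i * r j * (mu * norm (xh i - xh j) - mu * norm (x i - x j)) \<le> r i * r j * (d i j \<bullet> ((x i - xh i) - (x j - xh j)))"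
      by (simp add: mult_left_mono)
  qed
  have e4: "(\<Sum>i<n. \<Sum>j\<in>{i<..<n}. r i * r j * (mu * norm (xh i - xh j) - mu * norm (x i - x j))) = mu * Dsum n r xh - mu * Dsum n r x"
    by (simp add: Dsum_def sum_distrib_left sum_subtractf algebra_simps)
  have e5: "(\<Sum>i<n. r i * (norm (x i - a i))\<^sup>2) = (\<Sum>i<n. r i * (norm (x i - xh i))\<^sup>2) + 2 * (\<Sum>i<n. r i * ((x i - xh i) \<bullet> (xh i - a i))) + (\<Sum>i<n. r i * (norm (xh i - a i))\<^sup>2)"
  proof -
    have "(\<Sum>i<n. r i * (norm (x i - a i))\<^sup>2) = (\<Sum>i<n. r i * (norm (x i - xh i))\<^sup>2 + 2 * (r i * ((x i - xh i) \<bullet> (xh i - a i))) + r i * (norm (xh i - a i))\<^sup>2)"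
      by (rule sum.cong) (simp_all only: e1 distrib_left mult.left_commute)
    then show ?thesis by (simp add: sum.distrib sum_distrib_left)
  qed
  show ?thesis unfolding Pobj_alt using e2 e3 e4 e5 by linarith
qed



lemma anti_cont: "continuous_on UNIV (\<lambda>D::nat\<times>nat\<Rightarrow>'a::euclidean_space. anti (curry D) i j)"
proof -
  have "continuous_on UNIV (\<lambda>D::nat\<times>nat\<Rightarrow>'a. D (i,j))" "continuous_on UNIV (\<lambda>D::nat\<times>nat\<Rightarrow>'a. - D (j,i))"
    by (auto intro: continuous_intros)
  then show ?thesis by (cases "i < j"; cases "j < i") (auto simp: anti_def)
qed

lemma cpt_box: fixes mu :: real shows "compact (PiE UNIV (\<lambda>_::nat\<times>nat. cball (0::'a::euclidean_space) mu))"
proof -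
  have "compactin (product_topology (\<lambda>_. euclidean) UNIV) (PiE UNIV (\<lambda>_::nat\<times>nat. cball (0::'a) mu))"
    by (simp add: compactin_PiE)
  then show ?thesis by (simp add: euclidean_product_topology)
qed

lemma two_point_sum:
  fixes f :: "nat \<Rightarrow> real"
  assumes "p < n" "q < n" "p \<noteq> q" "\<And>i. i \<noteq> p \<Longrightarrow> i \<noteq> q \<Longrightarrow> f i = 0"
  shows "(\<Sum>i<n. f i) = f p + f q"
proof -
  have "(\<Sum>i<n. f i) = (\<Sum>i\<in>{p,q}. f i)"
    by (rule sum.mono_neutral_right) (use assms in auto)
  then show ?thesis using assms by simp
qed

lemma unit_eq:
  fixes d v :: "'a::euclidean_space"
  assumes "norm d \<le> mu" "mu * norm v \<le> d \<bullet> v" "v \<noteq> 0"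
  shows "d = (mu / norm v) *\<^sub>R v"
proof -
  have nv: "norm v > 0" using assms by simp
  have "d \<bullet> v \<le> norm d * norm v" by (rule norm_cauchy_schwarz)
  have "(norm (d - (mu / norm v) *\<^sub>R v))\<^sup>2 = (norm d)\<^sup>2 - 2 * (mu / norm v) * (d \<bullet> v) + mu^2"
    using norm_add_sq[of d "- ((mu / norm v) *\<^sub>R v)"] assms(3) by (simp add: power_mult_distrib)
  also have "\<dots> \<le> 0"
  proof -
    have mu0: "mu \<ge> 0" using assms(1) norm_ge_zero order_trans by blast
    have "mu * mu \<le> (mu / norm v) * (d \<bullet> v)"
    proof -
      have "mu * norm v * (mu / norm v) \<le> (d \<bullet> v) * (mu / norm v)"
        using assms(2) mu0 nv by (intro mult_right_mono) auto
      then show ?thesis using nv by (simp add: field_simps)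
    qed
    moreover have "(norm d)\<^sup>2 \<le> mu^2" using assms(1) by (simp add: power_mono)
    ultimately show ?thesis by (simp add: power2_eq_square)
  qed
  finally show ?thesis by simp
qed

lemma cert_exists:
  fixes a :: "nat \<Rightarrow> 'a::euclidean_space"
  assumes mu0: "mu \<ge> 0" and rpos: "\<forall>i<n. r i > 0"
  shows "\<exists>d xh. cert n r a mu d xh"
proof -
  define S where "S = PiE UNIV (\<lambda>_::nat\<times>nat. cball (0::'a) mu)"
  define W where "W (D::nat\<times>nat\<Rightarrow>'a) i = wv n r (curry D) i" for D i
  define g where "g D = - (\<Sum>i<n. r i * (a i \<bullet> W D i + (1/2) * (norm (W D i))\<^sup>2))" for D
  have cS: "compact S" unfolding S_def by (rule cpt_box)
  have neS: "S \<noteq> {}" unfolding S_def using mu0 by (auto simp: PiE_eq_empty_iff)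
  have cW: "continuous_on UNIV (\<lambda>D. W D i)" for i
    unfolding W_def wv_def by (intro continuous_intros anti_cont)
  have cg: "continuous_on S g"
    unfolding g_def by (intro continuous_intros continuous_on_subset[OF cW]) auto
  obtain D where DS: "D \<in> S" and Dmax: "\<forall>D'\<in>S. g D' \<le> g D"
    using continuous_attains_sup[OF cS neS cg] by blast
  define d where "d = curry D"
  define xh where "xh i = a i + W D i" for i
  have nd: "norm (d i j) \<le> mu" for i j using DS unfolding S_def d_def by auto
  have comp: "mu * norm (xh q - xh p) \<le> d p q \<bullet> (xh q - xh p)" if pq: "p < q" "q < n" for p q
  proof (cases "xh q - xh p = 0")
    case True then show ?thesis by simp
  next
    case False
    define v where "v = xh q - xh p"
    define E where "E = (mu / norm v) *\<^sub>R v - d p q"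
    have key: "v \<bullet> E \<le> 0"
    proof (rule ccontr)
      assume "\<not> v \<bullet> E \<le> 0"
      then have vE: "v \<bullet> E > 0" by simp
      then have E0: "E \<noteq> 0" by auto
      define c where "c = (r p + r q) * (norm E)\<^sup>2"
      have rp: "r p > 0" "r q > 0" using rpos pq by auto
      have c0: "c > 0" unfolding c_def using rp E0 by auto
      define t where "t = min 1 ((v \<bullet> E) / c)"
      have t0: "t > 0" unfolding t_def using vE c0 by auto
      have t1: "t \<le> 1" unfolding t_def by auto
      have "t \<le> (v \<bullet> E) / c" unfolding t_def by simp
      then have tc: "t * c \<le> v \<bullet> E" using c0 by (simp add: le_divide_eq)
      define D' where "D' = D((p,q) := D (p,q) + t *\<^sub>R E)"
      have D'S: "D' \<in> S"
      proof -
        have "D (p,q) + t *\<^sub>R E = (1 - t) *\<^sub>R d p q + t *\<^sub>R ((mu / norm v) *\<^sub>R v)"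
          unfolding E_def d_def by (simp add: algebra_simps)
        moreover have "norm ((1 - t) *\<^sub>R d p q + t *\<^sub>R ((mu / norm v) *\<^sub>R v)) \<le> mu"
        proof -
          have "norm ((1 - t) *\<^sub>R d p q + t *\<^sub>R ((mu / norm v) *\<^sub>R v)) \<le> (1 - t) * norm (d p q) + t * norm ((mu / norm v) *\<^sub>R v)"
            using t0 t1 by (metis (no_types) abs_of_nonneg diff_ge_0_iff_ge less_imp_le norm_scaleR norm_triangle_ineq)
          also have "\<dots> \<le> (1 - t) * mu + t * mu"
            using t0 t1 nd[of p q] False mu0 unfolding v_def[symmetric]
            by (intro add_mono mult_left_mono) auto
          finally show ?thesis by (simp add: algebra_simps)
        qed
        ultimately show ?thesis using DS unfolding D'_def S_def by auto
      qed
      define h where "h i = (if i = p then r q *\<^sub>R (t *\<^sub>R E) else if i = q then - (r p *\<^sub>R (t *\<^sub>R E)) else 0)" for i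
      have Wh: "W D' i = W D i + h i" if "i < n" for i
      proof -
        have "anti (curry D') i j = anti (curry D) i j + (if i = p \<and> j = q then t *\<^sub>R E else if i = q \<and> j = p then - (t *\<^sub>R E) else 0)" for j
          unfolding D'_def anti_def using pq by auto
        then have "W D' i = W D i + (\<Sum>j<n. r j *\<^sub>R (if i = p \<and> j = q then t *\<^sub>R E else if i = q \<and> j = p then - (t *\<^sub>R E) else 0))"
          unfolding W_def wv_def by (simp add: scaleR_add_right sum.distrib)
        also have "(\<Sum>j<n. r j *\<^sub>R (if i = p \<and> j = q then t *\<^sub>R E else if i = q \<and> j = p then - (t *\<^sub>R E) else 0)) = h i"
        proof (cases "i = p")
          case True
          then have "(\<Sum>j<n. r j *\<^sub>R (if i = p \<and> j = q then t *\<^sub>R E else if i = q \<and> j = p then - (t *\<^sub>R E) else 0))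
             = (\<Sum>j<n. if j = q then r j *\<^sub>R (t *\<^sub>R E) else 0)" using pq by (intro sum.cong) auto
          then show ?thesis using True pq unfolding h_def by simp
        next
          case False
          show ?thesis
          proof (cases "i = q")
            case True
            then have "(\<Sum>j<n. r j *\<^sub>R (if i = p \<and> j = q then t *\<^sub>R E else if i = q \<and> j = p then - (t *\<^sub>R E) else 0))
               = (\<Sum>j<n. if j = p then - (r j *\<^sub>R (t *\<^sub>R E)) else 0)" using pq by (intro sum.cong) auto
            then show ?thesis using True pq unfolding h_def by simp
          next
            case False
            then show ?thesis using \<open>i \<noteq> p\<close> unfolding h_def by simp
          qed
        qed
        finally show ?thesis .
      qed
      have "g D' - g D = - (\<Sum>i<n. r i * (xh i \<bullet> h i + (1/2) * (norm (h i))\<^sup>2))"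
      proof -
        have "g D' - g D = - (\<Sum>i<n. r i * (a i \<bullet> W D' i + (1/2) * (norm (W D' i))\<^sup>2) - r i * (a i \<bullet> W D i + (1/2) * (norm (W D i))\<^sup>2))"
          unfolding g_def by (simp add: sum_subtractf)
        also have "\<dots> = - (\<Sum>i<n. r i * (xh i \<bullet> h i + (1/2) * (norm (h i))\<^sup>2))"
        proof -
          have "r i * (a i \<bullet> W D' i + (1/2) * (norm (W D' i))\<^sup>2) - r i * (a i \<bullet> W D i + (1/2) * (norm (W D i))\<^sup>2)
              = r i * (xh i \<bullet> h i + (1/2) * (norm (h i))\<^sup>2)" if "i < n" for i
            using Wh[OF that] norm_add_sq[of "W D i" "h i"] unfolding xh_def
            by (simp add: inner_add_right inner_add_left inner_commute algebra_simps)
          then show ?thesis by (intro arg_cong[where f=uminus] sum.cong) auto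
        qed
        finally show ?thesis .
      qed
      also have "(\<Sum>i<n. r i * (xh i \<bullet> h i + (1/2) * (norm (h i))\<^sup>2))
          = r p * (xh p \<bullet> h p + (1/2) * (norm (h p))\<^sup>2) + r q * (xh q \<bullet> h q + (1/2) * (norm (h q))\<^sup>2)"
        by (rule two_point_sum) (use pq in \<open>auto simp: h_def\<close>)
      also have "\<dots> = r p * r q * t * ((xh p - xh q) \<bullet> E) + (1/2) * (r p * r q * (r p + r q)) * t^2 * (norm E)\<^sup>2"
        using pq by (simp add: h_def inner_diff_left power2_eq_square algebra_simps)
      finally have gd: "g D' - g D = - (r p * r q * t * ((xh p - xh q) \<bullet> E) + (1/2) * (r p * r q * (r p + r q)) * t^2 * (norm E)\<^sup>2)" .
      have "g D' \<le> g D" using Dmax D'S by auto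
      then have "r p * r q * t * (v \<bullet> E) \<le> (1/2) * (r p * r q) * t * (t * c)"
        using gd unfolding v_def c_def by (simp add: inner_diff_left power2_eq_square algebra_simps)
      then have "v \<bullet> E \<le> (1/2) * (t * c)"
        using rp t0 by (simp add: mult.assoc)
      then show False using tc vE by linarith
    qed
    have "v \<bullet> ((mu / norm v) *\<^sub>R v) = mu * norm v"
      using False unfolding v_def[symmetric] by (simp add: power2_norm_eq_inner[symmetric] power2_eq_square)
    then show ?thesis using key unfolding E_def v_def[symmetric] by (simp add: inner_diff_right inner_commute)
  qed
  have "cert n r a mu d xh"
    unfolding cert_def using nd comp by (auto simp: xh_def W_def d_def)
  then show ?thesis by blast
qed



lemma Pobj_cong: "(\<forall>i<n. x i = y i) \<Longrightarrow> Pobj n r a mu x = Pobj n r a mu y"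
  unfolding Pobj_def by (intro arg_cong2[where f="(+)"] arg_cong2[where f="(*)"] refl sum.cong) auto

lemma Dsum_cong: "(\<forall>i<n. x i = y i) \<Longrightarrow> Dsum n r x = Dsum n r y"
  unfolding Dsum_def by (intro sum.cong) auto

lemma cert_cong: "(\<forall>i<n. x i = y i) \<Longrightarrow> cert n r a mu d x = cert n r a mu d y"
  unfolding cert_def by auto

lemma xstar_cert:
  assumes c: "cert n r a mu d xh" and rpos: "\<forall>i<n. r i > 0"
  shows "\<forall>i<n. xstar n r a mu i = xh i"
proof -
  define x0 where "x0 i = (if i < n then xh i else 0)" for i
  have P0: "Pobj n r a mu x0 = Pobj n r a mu xh" by (rule Pobj_cong) (simp add: x0_def)
  have sq0: "(\<Sum>i<n. r i * (norm (x i - xh i))\<^sup>2) \<ge> 0" for x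
    using rpos by (intro sum_nonneg) (simp add: less_imp_le)
  have "xstar n r a mu = x0"
    unfolding xstar_def
  proof (rule the_equality)
    show "(\<forall>i\<ge>n. x0 i = 0) \<and> (\<forall>y. (\<forall>i\<ge>n. y i = 0) \<longrightarrow> Pobj n r a mu x0 \<le> Pobj n r a mu y)"
    proof (intro conjI allI impI)
      fix i :: nat assume "i \<ge> n" then show "x0 i = 0" by (simp add: x0_def)
    next
      fix y :: "nat \<Rightarrow> 'a"
      have "Pobj n r a mu xh + (1/2) * (\<Sum>i<n. r i * (norm (y i - xh i))\<^sup>2) \<le> Pobj n r a mu y"
        by (rule cert_ineq[OF c rpos])
      then show "Pobj n r a mu x0 \<le> Pobj n r a mu y" using sq0[of y] P0 by linarith
    qed
  next
    fix x assume h: "(\<forall>i\<ge>n. x i = 0) \<and> (\<forall>y. (\<forall>i\<ge>n. y i = 0) \<longrightarrow> Pobj n r a mu x \<le> Pobj n r a mu y)"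
    then have "Pobj n r a mu x \<le> Pobj n r a mu x0" by (auto simp: x0_def)
    then have "(\<Sum>i<n. r i * (norm (x i - xh i))\<^sup>2) \<le> 0"
      using cert_ineq[OF c rpos, of x] P0 by linarith
    then have "(\<Sum>i<n. r i * (norm (x i - xh i))\<^sup>2) = 0" using sq0[of x] by linarith
    then have "\<forall>i\<in>{..<n}. r i * (norm (x i - xh i))\<^sup>2 = 0"
      using rpos by (subst sum_nonneg_eq_0_iff[symmetric]) (auto simp: less_imp_le)
    then have "\<forall>i<n. x i = xh i" using rpos by (metis lessThan_iff less_irrefl mult_eq_0_iff norm_eq_zero power_eq_0_iff right_minus_eq)
    then show "x = x0" using h unfolding x0_def by (auto simp: not_less)
  qed
  then show ?thesis by (simp add: x0_def)
qed

lemma xstar_ineq: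
  fixes a :: "nat \<Rightarrow> 'a::euclidean_space"
  assumes mu0: "mu \<ge> 0" and rpos: "\<forall>i<n. r i > 0"
  shows "Pobj n r a mu (xstar n r a mu) + (1/2) * (\<Sum>i<n. r i * (norm (x i - xstar n r a mu i))\<^sup>2) \<le> Pobj n r a mu x"
proof -
  obtain d xh where c: "cert n r a mu d xh" using cert_exists[OF mu0 rpos] by blast
  have e: "\<forall>i<n. xstar n r a mu i = xh i" by (rule xstar_cert[OF c rpos])
  have c': "cert n r a mu d (xstar n r a mu)" using c cert_cong[OF e] by simp
  show ?thesis by (rule cert_ineq[OF c' rpos])
qed

lemma xstar_zero:
  fixes a :: "nat \<Rightarrow> 'a::euclidean_space"
  assumes rpos: "\<forall>i<n. r i > 0"
  shows "\<forall>i<n. xstar n r a 0 i = a i"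
proof -
  have z: "anti (\<lambda>_ _. 0::'a) i j = 0" for i j by (simp add: anti_def)
  have "cert n r a 0 (\<lambda>_ _. 0) a" unfolding cert_def wv_def z by simp
  then show ?thesis by (rule xstar_cert[OF _ rpos])
qed

lemma Dsum_nonneg: assumes "\<forall>i<n. r i > 0" shows "Dsum n r x \<ge> 0"
  unfolding Dsum_def using assms by (intro sum_nonneg) (auto simp: less_imp_le)

lemma Dsum_xstar:
  fixes a :: "nat \<Rightarrow> 'a::euclidean_space"
  assumes mu0: "mu \<ge> 0" and rpos: "\<forall>i<n. r i > 0"
  shows "Dsum n r (xstar n r a mu) \<le> Dsum n r a"
proof (cases "mu = 0")
  case True
  then show ?thesis using Dsum_cong[OF xstar_zero[OF rpos, of a]] by simp
next
  case False
  then have mu: "mu > 0" using mu0 by simp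
  have "Pobj n r a mu (xstar n r a mu) \<le> Pobj n r a mu a"
  proof -
    have "0 \<le> (\<Sum>i<n. r i * (norm (a i - xstar n r a mu i))\<^sup>2)"
      using rpos by (intro sum_nonneg) (simp add: less_imp_le)
    then show ?thesis using xstar_ineq[OF mu0 rpos, of a a] by linarith
  qed
  moreover have "(\<Sum>i<n. r i * (norm (xstar n r a mu i - a i))\<^sup>2) \<ge> 0"
    using rpos by (intro sum_nonneg) (simp add: less_imp_le)
  ultimately have "mu * Dsum n r (xstar n r a mu) \<le> mu * Dsum n r a"
    unfolding Pobj_alt by simp
  then show ?thesis using mu by simp
qed

lemma xstar_lip:
  fixes a :: "nat \<Rightarrow> 'a::euclidean_space"
  assumes mu0: "mu \<ge> 0" and mu0': "mu' \<ge> 0" and rpos: "\<forall>i<n. r i > 0"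
  shows "(\<Sum>i<n. r i * (norm (xstar n r a mu' i - xstar n r a mu i))\<^sup>2) \<le> \<bar>mu - mu'\<bar> * Dsum n r a"
proof -
  define x where "x = xstar n r a mu"
  define x' where "x' = xstar n r a mu'"
  define S where "S = (\<Sum>i<n. r i * (norm (x' i - x i))\<^sup>2)"
  have S': "(\<Sum>i<n. r i * (norm (x i - x' i))\<^sup>2) = S" unfolding S_def by (simp add: norm_minus_commute)
  have h1: "Pobj n r a mu x + (1/2) * S \<le> Pobj n r a mu x'"
    using xstar_ineq[OF mu0 rpos, of a x'] unfolding x_def x'_def S_def .
  have h2: "Pobj n r a mu' x' + (1/2) * S \<le> Pobj n r a mu' x"
    using xstar_ineq[OF mu0' rpos, of a x] S' unfolding x_def x'_def by simp
  have "S \<le> (mu - mu') * (Dsum n r x' - Dsum n r x)"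
    using h1 h2 unfolding Pobj_alt by (simp add: algebra_simps)
  also have "\<dots> \<le> \<bar>mu - mu'\<bar> * \<bar>Dsum n r x' - Dsum n r x\<bar>"
    by (metis abs_ge_self abs_mult)
  also have "\<dots> \<le> \<bar>mu - mu'\<bar> * Dsum n r a"
  proof (rule mult_left_mono)
    have "Dsum n r x' \<le> Dsum n r a" "Dsum n r x \<le> Dsum n r a" "Dsum n r x' \<ge> 0" "Dsum n r x \<ge> 0"
      using Dsum_xstar[OF mu0' rpos] Dsum_xstar[OF mu0 rpos] Dsum_nonneg[OF rpos] unfolding x_def x'_def by auto
    then show "\<bar>Dsum n r x' - Dsum n r x\<bar> \<le> Dsum n r a" by linarith
  qed simp
  finally show ?thesis unfolding S_def x_def x'_def .
qed

lemma term_le_sum: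
  fixes r :: "nat \<Rightarrow> real"
  assumes "\<forall>i<n. r i > 0" "i < n"
  shows "r i * (norm (v i :: 'a::real_normed_vector))\<^sup>2 \<le> (\<Sum>i<n. r i * (norm (v i))\<^sup>2)"
proof -
  have "r i * (norm (v i))\<^sup>2 = (\<Sum>k\<in>{i}. r k * (norm (v k))\<^sup>2)" by simp
  also have "\<dots> \<le> (\<Sum>k<n. r k * (norm (v k))\<^sup>2)"
    by (rule sum_mono2) (use assms in \<open>auto simp: less_imp_le\<close>)
  finally show ?thesis .
qed

lemma sq_sum_le: fixes p q :: real shows "(p + q)\<^sup>2 \<le> 2 * p\<^sup>2 + 2 * q\<^sup>2"
proof -
  have "0 \<le> (p - q)\<^sup>2" by simp
  then show ?thesis by (simp add: power2_eq_square algebra_simps)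
qed

lemma inf_in_E:
  fixes a :: "nat \<Rightarrow> 'a::euclidean_space"
  assumes rpos: "\<forall>i<n. r i > 0" and ij: "i < n" "j < n"
    and ne: "m1 \<in> {m. 0 \<le> m \<and> xstar n r a m i = xstar n r a m j}"
  shows "Inf {m. 0 \<le> m \<and> xstar n r a m i = xstar n r a m j} \<in> {m. 0 \<le> m \<and> xstar n r a m i = xstar n r a m j}"
proof -
  define E where "E = {m. 0 \<le> m \<and> xstar n r a m i = xstar n r a m j}"
  define m0 where "m0 = Inf E"
  have bdd: "bdd_below E" unfolding E_def by (rule bdd_belowI[of _ 0]) auto
  have neE: "E \<noteq> {}" using ne unfolding E_def by auto
  have m00: "m0 \<ge> 0" unfolding m0_def using neE by (intro cInf_greatest) (auto simp: E_def)
  define X where "X m = xstar n r a m" for m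
  define Dd where "Dd = Dsum n r a"
  have Dd0: "Dd \<ge> 0" unfolding Dd_def by (rule Dsum_nonneg[OF rpos])
  define c where "c = 2 * Dd / r i + 2 * Dd / r j"
  have bound: "(norm (X m0 i - X m0 j))\<^sup>2 \<le> e * c" if e: "e > 0" for e
  proof -
    obtain m where mE: "m \<in> E" and mlt: "m < m0 + e"
      using cInf_lessD[OF neE, of "m0 + e"] e unfolding m0_def by auto
    have m0m: "m0 \<le> m" unfolding m0_def using mE bdd by (rule cInf_lower)
    have m0: "m \<ge> 0" using mE unfolding E_def by auto
    have eq: "X m i = X m j" using mE unfolding E_def X_def by auto
    have L: "(\<Sum>k<n. r k * (norm (X m k - X m0 k))\<^sup>2) \<le> \<bar>m0 - m\<bar> * Dd"
      using xstar_lip[OF m00 m0 rpos, of a] unfolding X_def Dd_def .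
    have am: "\<bar>m0 - m\<bar> * Dd \<le> e * Dd" using m0m mlt Dd0 by (intro mult_right_mono) auto
    have bi: "r i * (norm (X m i - X m0 i))\<^sup>2 \<le> e * Dd"
      using term_le_sum[OF rpos ij(1), of "\<lambda>k. X m k - X m0 k"] L am by linarith
    have bj: "r j * (norm (X m j - X m0 j))\<^sup>2 \<le> e * Dd"
      using term_le_sum[OF rpos ij(2), of "\<lambda>k. X m k - X m0 k"] L am by linarith
    have ri: "r i > 0" "r j > 0" using rpos ij by auto
    have bi': "(norm (X m i - X m0 i))\<^sup>2 \<le> e * Dd / r i" using bi ri by (simp add: le_divide_eq mult.commute)
    have bj': "(norm (X m j - X m0 j))\<^sup>2 \<le> e * Dd / r j" using bj ri by (simp add: le_divide_eq mult.commute)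
    have "X m0 i - X m0 j = - (X m i - X m0 i) + (X m j - X m0 j)" using eq by (simp add: algebra_simps)
    then have "norm (X m0 i - X m0 j) \<le> norm (- (X m i - X m0 i)) + norm (X m j - X m0 j)"
      by (metis norm_triangle_ineq)
    then have "norm (X m0 i - X m0 j) \<le> norm (X m i - X m0 i) + norm (X m j - X m0 j)"
      by (simp only: norm_minus_cancel)
    then have "(norm (X m0 i - X m0 j))\<^sup>2 \<le> (norm (X m i - X m0 i) + norm (X m j - X m0 j))\<^sup>2"
      by (simp add: power_mono)
    also have "\<dots> \<le> 2 * (norm (X m i - X m0 i))\<^sup>2 + 2 * (norm (X m j - X m0 j))\<^sup>2"
      by (rule sq_sum_le)
    also have "\<dots> \<le> 2 * (e * Dd / r i) + 2 * (e * Dd / r j)" using bi' bj' by linarith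
    also have "\<dots> = e * c" unfolding c_def by (simp add: algebra_simps)
    finally show ?thesis .
  qed
  have "(norm (X m0 i - X m0 j))\<^sup>2 \<le> 0"
  proof (rule ccontr)
    assume "\<not> (norm (X m0 i - X m0 j))\<^sup>2 \<le> 0"
    then have pos: "(norm (X m0 i - X m0 j))\<^sup>2 > 0" by simp
    have c0: "c \<ge> 0" unfolding c_def using Dd0 rpos ij by (intro add_nonneg_nonneg divide_nonneg_nonneg) auto
    define e where "e = (norm (X m0 i - X m0 j))\<^sup>2 / (2 * (c + 1))"
    have e0: "e > 0" unfolding e_def using pos c0 by auto
    have "e * c < (norm (X m0 i - X m0 j))\<^sup>2"
    proof -
      have "e * c \<le> e * (c + 1)" using e0 by simp
      also have "\<dots> = (norm (X m0 i - X m0 j))\<^sup>2 / 2" unfolding e_def using c0 by (simp add: field_simps)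
      also have "\<dots> < (norm (X m0 i - X m0 j))\<^sup>2" using pos by simp
      finally show ?thesis .
    qed
    then show False using bound[OF e0] by linarith
  qed
  then have "X m0 i = X m0 j" by simp
  then show ?thesis using m00 unfolding E_def[symmetric] m0_def[symmetric] by (simp add: E_def X_def)
qed



lemma rprime_pos:
  assumes "\<forall>i<n. r i > 0" "C \<noteq> {}" "C \<subseteq> {..<n}"
  shows "rprime r C > 0"
proof -
  have "finite C" using assms(3) finite_subset by blast
  then show ?thesis unfolding rprime_def using assms by (intro sum_pos) auto
qed

lemma anti_dR_bounds:
  assumes c: "cert K r' a' lam dR xR" and k: "k < K" "k' < K" "k \<noteq> k'"
  shows "norm (anti dR k k') \<le> lam \<and> lam * norm (xR k' - xR k) \<le> anti dR k k' \<bullet> (xR k' - xR k)"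
proof (cases "k < k'")
  case True then show ?thesis using c k unfolding cert_def anti_def by auto
next
  case False
  then have "k' < k" using k by simp
  then have h: "norm (dR k' k) \<le> lam" "lam * norm (xR k - xR k') \<le> dR k' k \<bullet> (xR k - xR k')"
    using c k unfolding cert_def by auto
  have "anti dR k k' = - dR k' k" using \<open>k' < k\<close> by (simp add: anti_def)
  moreover have "- dR k' k \<bullet> (xR k' - xR k) = dR k' k \<bullet> (xR k - xR k')" by (simp add: inner_diff_right)
  ultimately show ?thesis using h by (simp add: norm_minus_commute)
qed

lemma lift:
  fixes a :: "nat \<Rightarrow> 'a::euclidean_space" and C :: "nat \<Rightarrow> nat set"
  assumes rpos: "\<forall>i<n. r i > 0"
    and Cne: "\<forall>k<K. C k \<noteq> {} \<and> C k \<subseteq> {..<n}"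
    and Cdisj: "\<forall>k<K. \<forall>k'<K. k \<noteq> k' \<longrightarrow> C k \<inter> C k' = {}"
    and Cun: "(\<Union>k<K. C k) = {..<n}"
    and mu: "0 \<le> mu" "mu \<le> lam"
    and dpb: "\<forall>k<K. \<forall>i\<in>C k. \<forall>j\<in>C k. i < j \<longrightarrow> norm (dp i j) \<le> mu"
    and dpe: "\<forall>k<K. \<forall>i\<in>C k. a i - abar r a (C k) = - (\<Sum>j\<in>C k. r j *\<^sub>R anti dp i j)"
  shows "\<exists>dR xR. cert K (\<lambda>k. rprime r (C k)) (\<lambda>k. abar r a (C k)) lam dR xR \<and> (\<forall>k<K. \<forall>i\<in>C k. xstar n r a lam i = xR k)"
proof -
  define r' where "r' k = rprime r (C k)" for k
  define a' where "a' k = abar r a (C k)" for k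
  have r'pos: "\<forall>k<K. r' k > 0" unfolding r'_def using Cne by (auto intro!: rprime_pos[OF rpos])
  have lam0: "lam \<ge> 0" using mu by simp
  obtain dR xR where cR: "cert K r' a' lam dR xR" using cert_exists[OF lam0 r'pos] by blast
  have exk: "\<exists>k<K. i \<in> C k" if "i < n" for i using Cun that by auto
  have unik: "k = k'" if "k < K" "k' < K" "i \<in> C k" "i \<in> C k'" for i k k'
    using Cdisj that by blast
  define cl where "cl i = (THE k. k < K \<and> i \<in> C k)" for i
  have clU: "cl i = k" if "k < K" "i \<in> C k" for i k
    unfolding cl_def using that unik by (intro the_equality) auto
  have clP: "cl i < K \<and> i \<in> C (cl i)" if "i < n" for i
    using exk[OF that] clU by blast
  define d where "d i j = (if cl i = cl j then dp i j else anti dR (cl i) (cl j))" for i j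
  define xs where "xs i = xR (cl i)" for i
  have antid: "anti d i j = (if cl i = cl j then anti dp i j else anti dR (cl i) (cl j))" for i j
  proof -
    consider "i < j" | "j < i" | "i = j" by linarith
    then show ?thesis
    proof cases
      case 1 then show ?thesis by (simp add: anti_def d_def)
    next
      case 2
      have "anti dp i j = - dp j i" "anti dR (cl i) (cl j) = - anti dR (cl j) (cl i)" using 2
        by (simp_all add: anti_def anti_swap[of dR "cl i" "cl j"])
      then show ?thesis using 2 by (auto simp: anti_def d_def)
    next
      case 3 then show ?thesis by simp
    qed
  qed
  have ct: "cert n r a lam d xs"
    unfolding cert_def
  proof (rule conjI; intro allI impI)
    fix i j assume ij: "i < n" "j < n" "i < j"
    show "norm (d i j) \<le> lam \<and> lam * norm (xs j - xs i) \<le> d i j \<bullet> (xs j - xs i)"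
    proof (cases "cl i = cl j")
      case True
      then have "i \<in> C (cl i)" "j \<in> C (cl i)" "cl i < K" using clP ij by metis+
      then have "norm (dp i j) \<le> mu" using dpb ij by blast
      then show ?thesis using True mu by (simp add: d_def xs_def)
    next
      case False
      then show ?thesis using anti_dR_bounds[OF cR, of "cl i" "cl j"] clP ij by (simp add: d_def xs_def)
    qed
  next
    fix i assume i: "i < n"
    define k where "k = cl i"
    have k: "k < K" "i \<in> C k" using clP[OF i] unfolding k_def by auto
    have fin: "finite (C k')" if "k' < K" for k' using Cne that finite_subset by blast
    have "wv n r d i = (\<Sum>j\<in>(\<Union>k'\<in>{..<K}. C k'). r j *\<^sub>R anti d i j)"
      unfolding wv_def using Cun by simp
    also have "\<dots> = (\<Sum>k'<K. \<Sum>j\<in>C k'. r j *\<^sub>R anti d i j)"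
      by (rule sum.UNION_disjoint) (use fin Cdisj in auto)
    also have "\<dots> = (\<Sum>k'<K. (if k = k' then (\<Sum>j\<in>C k. r j *\<^sub>R anti dp i j) else 0) + r' k' *\<^sub>R anti dR k k')"
    proof (rule sum.cong[OF refl])
      fix k' assume k': "k' \<in> {..<K}"
      have cj: "cl j = k'" if "j \<in> C k'" for j using clU k' that by auto
      show "(\<Sum>j\<in>C k'. r j *\<^sub>R anti d i j) = (if k = k' then (\<Sum>j\<in>C k. r j *\<^sub>R anti dp i j) else 0) + r' k' *\<^sub>R anti dR k k'"
      proof (cases "k = k'")
        case True
        then show ?thesis using cj by (auto intro!: sum.cong simp: antid k_def)
      next
        case False
        have "(\<Sum>j\<in>C k'. r j *\<^sub>R anti d i j) = (\<Sum>j\<in>C k'. r j *\<^sub>R anti dR k k')"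
          using cj False by (auto intro!: sum.cong simp: antid k_def)
        then show ?thesis using False by (simp add: r'_def rprime_def scaleR_sum_left)
      qed
    qed
    also have "\<dots> = (\<Sum>j\<in>C k. r j *\<^sub>R anti dp i j) + wv K r' dR k"
      using k by (simp add: sum.distrib wv_def)
    also have "\<dots> = (a' k - a i) + (xR k - a' k)"
    proof -
      have h: "a i - a' k = - (\<Sum>j\<in>C k. r j *\<^sub>R anti dp i j)" using dpe k unfolding a'_def by blast
      have e1: "(\<Sum>j\<in>C k. r j *\<^sub>R anti dp i j) = - (a i - a' k)" using h by simp
      have e2: "wv K r' dR k = xR k - a' k" using cR k unfolding cert_def by simp
      show ?thesis unfolding e1 e2 by simp
    qed
    also have "\<dots> = xs i - a i" by (simp add: xs_def k_def)
    finally show "xs i - a i = wv n r d i" by simp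
  qed
  have "\<forall>i<n. xstar n r a lam i = xs i" by (rule xstar_cert[OF ct rpos])
  then have "\<forall>k<K. \<forall>i\<in>C k. xstar n r a lam i = xR k"
  proof (intro allI impI ballI)
    fix k i assume k: "k < K" and i: "i \<in> C k"
    then have "i < n" using Cne by blast
    then show "xstar n r a lam i = xR k" using \<open>\<forall>i<n. xstar n r a lam i = xs i\<close> clU[OF k i] unfolding xs_def by simp
  qed
  then show ?thesis using cR unfolding r'_def a'_def by blast
qed



lemma fam_props:
  fixes F :: "nat \<Rightarrow> 'b"
  assumes C: "bij_betw C {..<K} ((\<lambda>i0. {j. j < n \<and> F j = F i0}) ` {..<n})"
  shows "\<forall>k<K. C k \<noteq> {} \<and> C k \<subseteq> {..<n}"
    and "\<forall>k<K. \<forall>k'<K. k \<noteq> k' \<longrightarrow> C k \<inter> C k' = {}"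
    and "(\<Union>k<K. C k) = {..<n}"
    and "\<forall>k<K. \<forall>i\<in>C k. C k = {j. j < n \<and> F j = F i}"
proof -
  have im: "C ` {..<K} = (\<lambda>i0. {j. j < n \<and> F j = F i0}) ` {..<n}" using C by (simp add: bij_betw_def)
  have inj: "inj_on C {..<K}" using C by (simp add: bij_betw_def)
  have mem: "\<exists>i0<n. C k = {j. j < n \<and> F j = F i0}" if "k < K" for k
    using im that by (metis (no_types, lifting) imageE imageI lessThan_iff)
  show char: "\<forall>k<K. \<forall>i\<in>C k. C k = {j. j < n \<and> F j = F i}"
  proof (intro allI impI ballI)
    fix k i assume "k < K" "i \<in> C k"
    then obtain i0 where "i0 < n" "C k = {j. j < n \<and> F j = F i0}" using mem by blast
    then show "C k = {j. j < n \<and> F j = F i}" using \<open>i \<in> C k\<close> by auto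
  qed
  show "\<forall>k<K. C k \<noteq> {} \<and> C k \<subseteq> {..<n}"
  proof (intro allI impI)
    fix k assume "k < K"
    then obtain i0 where "i0 < n" "C k = {j. j < n \<and> F j = F i0}" using mem by blast
    then show "C k \<noteq> {} \<and> C k \<subseteq> {..<n}" by auto
  qed
  show "\<forall>k<K. \<forall>k'<K. k \<noteq> k' \<longrightarrow> C k \<inter> C k' = {}"
  proof (intro allI impI)
    fix k k' assume kk: "k < K" "k' < K" "k \<noteq> k'"
    show "C k \<inter> C k' = {}"
    proof (rule ccontr)
      assume "C k \<inter> C k' \<noteq> {}"
      then obtain i where "i \<in> C k" "i \<in> C k'" by blast
      then have "C k = C k'" using char kk by metis
      then show False using inj kk by (meson inj_onD lessThan_iff)
    qed
  qed
  show "(\<Union>k<K. C k) = {..<n}"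
  proof -
    have "\<Union>((\<lambda>i0. {j. j < n \<and> F j = F i0}) ` {..<n}) = {..<n}" by auto
    then show ?thesis using im by simp
  qed
qed

lemma quot_eq_fam:
  "{..<n} // {(i, j). i < n \<and> j < n \<and> F i = F j} = (\<lambda>i0. {j. j < n \<and> F j = F i0}) ` {..<n}"
proof -
  have e: "{(i, j). i < n \<and> j < n \<and> F i = F j} `` {x} = {j. j < n \<and> F j = F x}" if "x < n" for x
    using that by auto
  have "{..<n} // {(i, j). i < n \<and> j < n \<and> F i = F j} = (\<lambda>x. {(i, j). i < n \<and> j < n \<and> F i = F j} `` {x}) ` {..<n}"
    unfolding quotient_def by auto
  also have "\<dots> = (\<lambda>i0. {j. j < n \<and> F j = F i0}) ` {..<n}"
    using e by (intro image_cong refl) auto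
  finally show ?thesis .
qed

lemma sing_eq_fam:
  "(\<lambda>i. {i}) ` {..<n} = (\<lambda>i0. {j::nat. j < n \<and> j = i0}) ` {..<n}"
  by (intro image_cong refl) auto

lemma nosplit:
  fixes a :: "nat \<Rightarrow> 'a::euclidean_space"
  assumes rpos: "\<forall>i<n. r i > 0" and mu: "0 \<le> mu" "mu \<le> lam" and ij: "i < n" "j < n"
    and eq: "xstar n r a mu i = xstar n r a mu j"
  shows "xstar n r a lam i = xstar n r a lam j"
proof -
  obtain d xh where c: "cert n r a mu d xh" using cert_exists[OF mu(1) rpos] by blast
  have xe: "\<forall>i<n. xstar n r a mu i = xh i" by (rule xstar_cert[OF c rpos])
  define P where "P = (\<lambda>i0. {j. j < n \<and> xh j = xh i0}) ` {..<n}"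
  have finP: "finite P" unfolding P_def by simp
  obtain C where Cb: "bij_betw C {0..<card P} P" using ex_bij_betw_nat_finite[OF finP] by blast
  define K where "K = card P"
  have Cb': "bij_betw C {..<K} ((\<lambda>i0. {j. j < n \<and> xh j = xh i0}) ` {..<n})"
    using Cb unfolding K_def P_def by (simp add: atLeast0LessThan)
  note fp = fam_props[OF Cb']
  have dpb: "\<forall>k<K. \<forall>i\<in>C k. \<forall>j\<in>C k. i < j \<longrightarrow> norm (d i j) \<le> mu"
    using c fp(1) unfolding cert_def by blast
  have dpe: "\<forall>k<K. \<forall>i\<in>C k. a i - abar r a (C k) = - (\<Sum>j\<in>C k. r j *\<^sub>R anti d i j)"
  proof (intro allI impI ballI)
    fix k i assume k: "k < K" and i: "i \<in> C k"
    define p where "p = xh i"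
    have Ck: "C k = {j. j < n \<and> xh j = p}" using fp(4) k i unfolding p_def by blast
    have Csub: "C k \<subseteq> {..<n}" using fp(1) k by blast
    have finC: "finite (C k)" using Csub finite_subset by blast
    define V where "V = (\<Sum>j\<in>{..<n} - C k. r j *\<^sub>R ((mu / norm (xh j - p)) *\<^sub>R (xh j - p)))"
    have loc: "(\<Sum>j\<in>C k. r j *\<^sub>R anti d i' j) = (p - a i') - V" if i': "i' \<in> C k" for i'
    proof -
      have i'n: "i' < n" and pi': "xh i' = p" using i' Ck by auto
      have out: "anti d i' j = (mu / norm (xh j - p)) *\<^sub>R (xh j - p)" if j: "j \<in> {..<n} - C k" for j
      proof -
        have jn: "j < n" and nj: "xh j \<noteq> p" using j Ck by auto
        then have ne: "i' \<noteq> j" using pi' by auto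
        show ?thesis
        proof (cases "i' < j")
          case True
          have "d i' j = (mu / norm (xh j - xh i')) *\<^sub>R (xh j - xh i')"
            using c i'n jn True nj pi' unfolding cert_def by (intro unit_eq) auto
          then show ?thesis using True pi' by (simp add: anti_def)
        next
          case False
          then have ji: "j < i'" using ne by simp
          have "d j i' = (mu / norm (xh i' - xh j)) *\<^sub>R (xh i' - xh j)"
            using c i'n jn ji nj pi' unfolding cert_def by (intro unit_eq) auto
          then show ?thesis using ji pi' by (simp add: anti_def norm_minus_commute scaleR_diff_right)
        qed
      qed
      have "xh i' - a i' = wv n r d i'" using c i'n unfolding cert_def by blast
      also have "\<dots> = (\<Sum>j\<in>{..<n} - C k. r j *\<^sub>R anti d i' j) + (\<Sum>j\<in>C k. r j *\<^sub>R anti d i' j)"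
        unfolding wv_def by (rule sum.subset_diff[OF Csub]) simp
      also have "(\<Sum>j\<in>{..<n} - C k. r j *\<^sub>R anti d i' j) = V"
        unfolding V_def using out by (intro sum.cong) auto
      finally show ?thesis using pi' by (simp add: algebra_simps)
    qed
    have "(\<Sum>i'\<in>C k. \<Sum>j\<in>C k. (r i' * r j) *\<^sub>R anti d i' j) = 0" by (rule antisym_zero)
    then have "(\<Sum>i'\<in>C k. r i' *\<^sub>R (\<Sum>j\<in>C k. r j *\<^sub>R anti d i' j)) = 0"
      by (simp add: scaleR_sum_right)
    moreover have "(\<Sum>i'\<in>C k. r i' *\<^sub>R (\<Sum>j\<in>C k. r j *\<^sub>R anti d i' j)) = (\<Sum>i'\<in>C k. r i' *\<^sub>R ((p - V) - a i'))"
      using loc by (intro sum.cong refl) simp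
    ultimately have "(\<Sum>i'\<in>C k. r i' *\<^sub>R ((p - V) - a i')) = 0" by simp
    then have "(\<Sum>i'\<in>C k. r i' *\<^sub>R (p - V)) - (\<Sum>i'\<in>C k. r i' *\<^sub>R a i') = 0"
      by (simp add: scaleR_diff_right sum_subtractf)
    then have h: "rprime r (C k) *\<^sub>R (p - V) = (\<Sum>i'\<in>C k. r i' *\<^sub>R a i')"
      unfolding rprime_def by (simp add: scaleR_sum_left)
    have rp: "rprime r (C k) > 0" using fp(1) k by (intro rprime_pos[OF rpos]) auto
    have "abar r a (C k) = p - V"
      unfolding abar_def h[symmetric] using rp by simp
    then show "a i - abar r a (C k) = - (\<Sum>j\<in>C k. r j *\<^sub>R anti d i j)"
      using loc[OF i] by simp
  qed
  obtain dR xR where L: "\<forall>k<K. \<forall>i\<in>C k. xstar n r a lam i = xR k"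
    using lift[OF rpos fp(1) fp(2) fp(3) mu dpb dpe] by blast
  obtain k where k: "k < K" "i \<in> C k" using fp(3) ij by blast
  have Ck: "C k = {j. j < n \<and> xh j = xh i}" using fp(4) k by blast
  have "xh i = xh j" using eq xe ij by metis
  then have "j \<in> C k" unfolding Ck using ij by simp
  then show ?thesis using L k by metis
qed



lemma fusion_inf:
  assumes "fusion_value n r a mu"
  shows "\<exists>i<n. \<exists>j<n. mu = Inf {m. 0 \<le> m \<and> xstar n r a m i = xstar n r a m j}"
proof -
  obtain i j where ij: "i < n" "j < n" "xstar n r a mu i = xstar n r a mu j"
    and lt: "\<forall>m. 0 \<le> m \<and> m < mu \<longrightarrow> xstar n r a m i \<noteq> xstar n r a m j" and mu: "mu > 0"
    using assms unfolding fusion_value_def by blast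
  have "Inf {m. 0 \<le> m \<and> xstar n r a m i = xstar n r a m j} = mu"
    by (rule cInf_eq_minimum) (use ij mu lt in \<open>auto simp: not_less[symmetric]\<close>)
  then show ?thesis using ij by metis
qed

lemma fus_finite: "finite {mu. fusion_value n r a mu \<and> mu < lam}"
proof (rule finite_subset)
  show "{mu. fusion_value n r a mu \<and> mu < lam} \<subseteq> (\<lambda>(i,j). Inf {m. 0 \<le> m \<and> xstar n r a m i = xstar n r a m j}) ` ({..<n} \<times> {..<n})"
    using fusion_inf by fastforce
qed simp

lemma lam1_props:
  assumes lam: "lam > 0"
  shows "0 \<le> lam1 n r a lam \<and> lam1 n r a lam < lam"
    and "fusion_value n r a mu \<Longrightarrow> mu < lam \<Longrightarrow> 0 < lam1 n r a lam \<and> mu \<le> lam1 n r a lam"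
proof -
  define FS where "FS = {mu. fusion_value n r a mu \<and> mu < lam}"
  have fin: "finite FS" unfolding FS_def by (rule fus_finite)
  have pos: "\<forall>m\<in>FS. m > 0" unfolding FS_def fusion_value_def by auto
  show "0 \<le> lam1 n r a lam \<and> lam1 n r a lam < lam"
  proof (cases "FS = {}")
    case True then show ?thesis using lam unfolding lam1_def FS_def[symmetric] by simp
  next
    case False
    have "Max FS \<in> FS" using Max_in[OF fin False] .
    then show ?thesis using pos False unfolding lam1_def FS_def[symmetric] by (auto simp: FS_def less_imp_le)
  qed
  assume f: "fusion_value n r a mu" "mu < lam"
  then have m: "mu \<in> FS" unfolding FS_def by simp
  then have ne: "FS \<noteq> {}" by auto
  have "mu \<le> Max FS" using Max_ge[OF fin m] .
  moreover have "mu > 0" using pos m by auto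
  ultimately show "0 < lam1 n r a lam \<and> mu \<le> lam1 n r a lam"
    using ne unfolding lam1_def FS_def[symmetric] by simp
qed

lemma cone_ineq:
  fixes z b :: "'a::euclidean_space"
  assumes "s = u + 1" "norm (z, u) \<le> s" "norm (b, g) \<le> 1 - g"
  shows "g - z \<bullet> b \<le> s"
proof -
  have "\<bar>(z, u) \<bullet> (b, g)\<bar> \<le> norm (z, u) * norm (b, g)" by (rule Cauchy_Schwarz_ineq2)
  also have "\<dots> \<le> s * (1 - g)"
  proof (rule mult_mono)
    show "0 \<le> s" by (rule order_trans[OF norm_ge_zero assms(2)])
  qed (use assms in auto)
  finally have "- (s * (1 - g)) \<le> z \<bullet> b + u * g" by (simp add: inner_Pair)
  then show ?thesis using assms(1) by (simp add: algebra_simps)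
qed

lemma weak_duality:
  fixes a :: "nat \<Rightarrow> 'a::euclidean_space"
  assumes rpos: "\<forall>i<n. r i > 0" and lam: "lam \<ge> 0"
    and pf: "psocp_feasible n a x y z s u t" and df: "dsocp_feasible n r lam d b g"
  shows "dsocp_obj n r a b g \<le> psocp_obj n r lam s t"
proof -
  have beq: "b i = - wv n r d i" if "i < n" for i
    using df that unfolding dsocp_feasible_def wv_def by (metis add_eq_0_iff)
  have aeq: "a i = x i - z i" if "i < n" for i using pf that unfolding psocp_feasible_def by simp
  have "(\<Sum>i<n. r i * (x i \<bullet> b i)) = - (\<Sum>i<n. r i * (x i \<bullet> wv n r d i))"
    using beq by (simp add: sum_negf[symmetric])
  also have "\<dots> = - (\<Sum>i<n. \<Sum>j\<in>{i<..<n}. r i * r j * (d i j \<bullet> (x i - x j)))"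
    by (simp add: anti_sum_identity)
  also have "\<dots> \<le> (\<Sum>i<n. \<Sum>j\<in>{i<..<n}. r i * r j * (lam * t i j))"
  proof -
    have "(\<Sum>i<n. \<Sum>j\<in>{i<..<n}. - (r i * r j * (lam * t i j))) \<le> (\<Sum>i<n. \<Sum>j\<in>{i<..<n}. r i * r j * (d i j \<bullet> (x i - x j)))"
    proof (intro sum_mono)
      fix i j assume "i \<in> {..<n}" "j \<in> {i<..<n}"
      then have ij: "i < n" "j < n" "i < j" by auto
      have nd: "norm (d i j) \<le> lam" using df ij unfolding dsocp_feasible_def by blast
      have "y i j = x i - x j \<and> norm (y i j) \<le> t i j" using pf ij unfolding psocp_feasible_def by blast
      then have ty: "norm (x i - x j) \<le> t i j" by metis
      have "- (lam * norm (x i - x j)) \<le> d i j \<bullet> (x i - x j)" by (rule cs_lower[OF nd])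
      moreover have "lam * norm (x i - x j) \<le> lam * t i j" using ty lam by (rule mult_left_mono)
      ultimately have "- (lam * t i j) \<le> d i j \<bullet> (x i - x j)" by linarith
      moreover have "r i * r j \<ge> 0" using rpos ij by (simp add: less_imp_le)
      ultimately show "- (r i * r j * (lam * t i j)) \<le> r i * r j * (d i j \<bullet> (x i - x j))"
        by (metis mult_left_mono mult_minus_right)
    qed
    then show ?thesis by (simp add: sum_negf)
  qed
  also have "\<dots> = lam * (\<Sum>i<n. \<Sum>j\<in>{i<..<n}. r i * r j * t i j)"
    by (simp add: sum_distrib_left algebra_simps)
  finally have h1: "(\<Sum>i<n. r i * (x i \<bullet> b i)) \<le> lam * (\<Sum>i<n. \<Sum>j\<in>{i<..<n}. r i * r j * t i j)" .
  have h2: "(\<Sum>i<n. r i * (g i - z i \<bullet> b i)) \<le> (\<Sum>i<n. r i * s i)"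
  proof (intro sum_mono)
    fix i assume "i \<in> {..<n}"
    then have i: "i < n" by simp
    have "g i - z i \<bullet> b i \<le> s i"
      using pf df i unfolding psocp_feasible_def dsocp_feasible_def by (intro cone_ineq) auto
    then show "r i * (g i - z i \<bullet> b i) \<le> r i * s i" using rpos i by (simp add: mult_left_mono less_imp_le)
  qed
  have "dsocp_obj n r a b g = (\<Sum>i<n. r i * (x i \<bullet> b i)) + (\<Sum>i<n. r i * (g i - z i \<bullet> b i))"
  proof -
    have "(\<Sum>i<n. r i * (a i \<bullet> b i)) + (\<Sum>i<n. r i * g i) = (\<Sum>i<n. r i * (x i \<bullet> b i) + r i * (g i - z i \<bullet> b i))"
      unfolding sum.distrib[symmetric]
    proof (intro sum.cong refl)
      fix i assume "i \<in> {..<n}"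
      then have "a i \<bullet> b i = x i \<bullet> b i - z i \<bullet> b i" using aeq by (simp add: inner_diff_left)
      then show "r i * (a i \<bullet> b i) + r i * g i = r i * (x i \<bullet> b i) + r i * (g i - z i \<bullet> b i)"
        by (simp add: right_diff_distrib)
    qed
    then show ?thesis unfolding dsocp_obj_def by (simp add: sum.distrib)
  qed
  then show ?thesis unfolding psocp_obj_def using h1 h2 by linarith
qed

lemma regroup:
  fixes f g :: "nat \<Rightarrow> 'a::real_vector" and h :: "nat \<Rightarrow> 'a"
  assumes Cne: "\<forall>k<K. C k \<noteq> {} \<and> C k \<subseteq> {..<n}"
    and Cdisj: "\<forall>k<K. \<forall>k'<K. k \<noteq> k' \<longrightarrow> C k \<inter> C k' = {}"
    and Cun: "(\<Union>k<K. C k) = {..<n}"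
    and k: "k < K" and hk: "h k = 0"
    and f: "\<forall>k'<K. \<forall>j\<in>C k'. f j = (if k = k' then g j else h k')"
  shows "(\<Sum>j<n. r j *\<^sub>R f j) = (\<Sum>j\<in>C k. r j *\<^sub>R g j) + (\<Sum>k'<K. rprime r (C k') *\<^sub>R h k')"
proof -
  have fin: "finite (C k')" if "k' < K" for k' using Cne that finite_subset by blast
  have "(\<Sum>j<n. r j *\<^sub>R f j) = (\<Sum>j\<in>(\<Union>k'\<in>{..<K}. C k'). r j *\<^sub>R f j)" using Cun by simp
  also have "\<dots> = (\<Sum>k'<K. \<Sum>j\<in>C k'. r j *\<^sub>R f j)"
    by (rule sum.UNION_disjoint) (use fin Cdisj in auto)
  also have "\<dots> = (\<Sum>k'<K. (if k = k' then (\<Sum>j\<in>C k. r j *\<^sub>R g j) else 0) + rprime r (C k') *\<^sub>R h k')"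
  proof (rule sum.cong[OF refl])
    fix k' assume k': "k' \<in> {..<K}"
    show "(\<Sum>j\<in>C k'. r j *\<^sub>R f j) = (if k = k' then (\<Sum>j\<in>C k. r j *\<^sub>R g j) else 0) + rprime r (C k') *\<^sub>R h k'"
    proof (cases "k = k'")
      case True
      then show ?thesis using f k' hk by (auto intro!: sum.cong)
    next
      case False
      have "(\<Sum>j\<in>C k'. r j *\<^sub>R f j) = (\<Sum>j\<in>C k'. r j *\<^sub>R h k')"
        using f k' False by (auto intro!: sum.cong)
      then show ?thesis using False by (simp add: rprime_def scaleR_sum_left)
    qed
  qed
  also have "\<dots> = (\<Sum>j\<in>C k. r j *\<^sub>R g j) + (\<Sum>k'<K. rprime r (C k') *\<^sub>R h k')"
    using k by (simp add: sum.distrib)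
  finally show ?thesis .
qed


theorem lemma6p4:
  fixes n K :: nat and r :: "nat \<Rightarrow> real" and a :: "nat \<Rightarrow> 'a::euclidean_space"
    and lam :: real and C :: "nat \<Rightarrow> nat set" and xh :: "nat \<Rightarrow> 'a"
    and dp :: "nat \<Rightarrow> nat \<Rightarrow> 'a"
    and xs z beta :: "nat \<Rightarrow> 'a" and y delta :: "nat \<Rightarrow> nat \<Rightarrow> 'a"
    and s u gamma :: "nat \<Rightarrow> real" and t :: "nat \<Rightarrow> nat \<Rightarrow> real"
  assumes n2: "n \<ge> 2"
    and rpos: "\<forall>i<n. r i > 0"
    and lampos: "lam > 0"
    and notfus: "\<not> fusion_value n r a lam"
    and C: "bij_betw C {..<K} (clusters n r a (lam1 n r a lam))"
    and xh_min: "\<forall>x. Robj r a C K lam xh \<le> Robj r a C K lam x"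
    and dp_bound: "\<forall>k<K. \<forall>i\<in>C k. \<forall>j\<in>C k. i < j \<longrightarrow> norm (dp i j) \<le> lam1 n r a lam"
    and dp_eq: "\<forall>k<K. \<forall>i\<in>C k. a i - abar r a (C k) = - (\<Sum>j\<in>C k. r j *\<^sub>R anti dp i j)"
    and xs_def: "\<forall>k<K. \<forall>i\<in>C k. xs i = xh k"
    and y_def: "y = (\<lambda>i j. xs i - xs j)"
    and z_def: "z = (\<lambda>i. xs i - a i)"
    and s_def: "s = (\<lambda>i. (1/2) * (1 + (norm (z i))\<^sup>2))"
    and u_def: "u = (\<lambda>i. (1/2) * (-1 + (norm (z i))\<^sup>2))"
    and t_def: "t = (\<lambda>i j. norm (y i j))"
    and delta_def: "delta = (\<lambda>i j. if (\<exists>k<K. i \<in> C k \<and> j \<in> C k) then dp i j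
                       else lam *\<^sub>R ((1 / norm (xs j - xs i)) *\<^sub>R (xs j - xs i)))"
    and beta_def: "beta = (\<lambda>i. - z i)"
    and gamma_def: "gamma = (\<lambda>i. (1/2) * (1 - (norm (beta i))\<^sup>2))"
  shows "psocp_optimal n r a lam xs y z s u t \<and> dsocp_optimal n r a lam delta beta gamma"
proof -
  define L1 where "L1 = lam1 n r a lam"
  have L1b: "0 \<le> L1" "L1 < lam" using lam1_props(1)[OF lampos] unfolding L1_def by auto
  have Cb: "bij_betw C {..<K} (clusters n r a L1)" using C unfolding L1_def .
  have props: "(\<forall>k<K. C k \<noteq> {} \<and> C k \<subseteq> {..<n}) \<and> (\<forall>k<K. \<forall>k'<K. k \<noteq> k' \<longrightarrow> C k \<inter> C k' = {}) \<and> (\<Union>k<K. C k) = {..<n}"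
  proof (cases "L1 = 0")
    case True
    then have "bij_betw C {..<K} ((\<lambda>i0. {j. j < n \<and> (\<lambda>j::nat. j) j = (\<lambda>j::nat. j) i0}) ` {..<n})"
      using Cb by (simp add: clusters_def sing_eq_fam)
    from fam_props[OF this] show ?thesis by blast
  next
    case False
    then have "bij_betw C {..<K} ((\<lambda>i0. {j. j < n \<and> xstar n r a L1 j = xstar n r a L1 i0}) ` {..<n})"
      using Cb by (simp add: clusters_def quot_eq_fam)
    from fam_props[OF this] show ?thesis by blast
  qed
  then have Cne: "\<forall>k<K. C k \<noteq> {} \<and> C k \<subseteq> {..<n}"
    and Cdisj: "\<forall>k<K. \<forall>k'<K. k \<noteq> k' \<longrightarrow> C k \<inter> C k' = {}"
    and Cun: "(\<Union>k<K. C k) = {..<n}" by auto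
  have charpos: "\<forall>k<K. \<forall>i\<in>C k. C k = {j. j < n \<and> xstar n r a L1 j = xstar n r a L1 i}" if "L1 > 0"
  proof -
    have "bij_betw C {..<K} ((\<lambda>i0. {j. j < n \<and> xstar n r a L1 j = xstar n r a L1 i0}) ` {..<n})"
      using Cb that by (simp add: clusters_def quot_eq_fam)
    from fam_props(4)[OF this] show ?thesis .
  qed
  have charzero: "\<forall>k<K. \<forall>i\<in>C k. C k = {i}" if "L1 = 0"
  proof -
    have "bij_betw C {..<K} ((\<lambda>i0. {j. j < n \<and> (\<lambda>j::nat. j) j = (\<lambda>j::nat. j) i0}) ` {..<n})"
      using Cb that by (simp add: clusters_def sing_eq_fam)
    from fam_props(4)[OF this] have "\<forall>k<K. \<forall>i\<in>C k. C k = {j. j < n \<and> j = i}" by simp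
    then show ?thesis using Cne by blast
  qed
  define r' where "r' k = rprime r (C k)" for k
  define a' where "a' k = abar r a (C k)" for k
  have r'pos: "\<forall>k<K. r' k > 0" unfolding r'_def using Cne by (auto intro!: rprime_pos[OF rpos])
  have lam0: "lam \<ge> 0" using lampos by simp
  have dpb: "\<forall>k<K. \<forall>i\<in>C k. \<forall>j\<in>C k. i < j \<longrightarrow> norm (dp i j) \<le> L1" using dp_bound unfolding L1_def .
  obtain dR xR where cR0: "cert K (\<lambda>k. rprime r (C k)) (\<lambda>k. abar r a (C k)) lam dR xR"
    and XL: "\<forall>k<K. \<forall>i\<in>C k. xstar n r a lam i = xR k"
    using lift[OF rpos Cne Cdisj Cun L1b(1) less_imp_le[OF L1b(2)] dpb dp_eq] by blast
  have cR: "cert K r' a' lam dR xR" using cR0 unfolding r'_def a'_def .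
  have Req: "Robj r a C K lam x = Pobj K r' a' lam x" for x
    by (simp add: Robj_def Pobj_def r'_def a'_def)
  have xhR: "\<forall>k<K. xh k = xR k"
  proof -
    have "Pobj K r' a' lam xR + (1/2) * (\<Sum>k<K. r' k * (norm (xh k - xR k))\<^sup>2) \<le> Pobj K r' a' lam xh"
      by (rule cert_ineq[OF cR r'pos])
    moreover have "Pobj K r' a' lam xh \<le> Pobj K r' a' lam xR" using xh_min Req by metis
    moreover have sq0: "(\<Sum>k<K. r' k * (norm (xh k - xR k))\<^sup>2) \<ge> 0"
      using r'pos by (intro sum_nonneg) (simp add: less_imp_le)
    ultimately have "(\<Sum>k<K. r' k * (norm (xh k - xR k))\<^sup>2) = 0" by linarith
    then have "\<forall>k\<in>{..<K}. r' k * (norm (xh k - xR k))\<^sup>2 = 0"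
      using r'pos by (subst sum_nonneg_eq_0_iff[symmetric]) (auto simp: less_imp_le)
    then show ?thesis using r'pos by (metis lessThan_iff less_irrefl mult_eq_0_iff norm_eq_zero power_eq_0_iff right_minus_eq)
  qed
  have cH: "cert K r' a' lam dR xh" using cR cert_cong[OF xhR] by simp
  have XL': "\<forall>k<K. \<forall>i\<in>C k. xstar n r a lam i = xh k" using XL xhR by simp
  have exk: "\<exists>k<K. i \<in> C k" if "i < n" for i using Cun that by auto
  have unik: "k = k'" if "k < K" "k' < K" "i \<in> C k" "i \<in> C k'" for i k k'
    using Cdisj that by blast
  define cl where "cl i = (THE k. k < K \<and> i \<in> C k)" for i
  have clU: "cl i = k" if "k < K" "i \<in> C k" for i k
    unfolding cl_def using that unik by (intro the_equality) auto
  have clP: "cl i < K \<and> i \<in> C (cl i)" if "i < n" for i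
    using exk[OF that] clU by blast
  have xsc: "xs i = xh (cl i)" if "i < n" for i using xs_def clP[OF that] by blast
  have sep: "xstar n r a L1 i \<noteq> xstar n r a L1 j"
    if "L1 > 0" "k < K" "k' < K" "k \<noteq> k'" "i \<in> C k" "j \<in> C k'" for i j k k'
  proof
    assume eq: "xstar n r a L1 i = xstar n r a L1 j"
    have "j < n" using Cne that by blast
    moreover have Ck: "C k = {j. j < n \<and> xstar n r a L1 j = xstar n r a L1 i}" using charpos[OF that(1)] that(2,5) by blast
    ultimately have "j \<in> C k" using eq by simp
    then show False using Cdisj that by blast
  qed
  have dist: "a' k = a' k'" if kk: "k < K" "k' < K" "xh k = xh k'" for k k'
  proof (cases "k = k'")
    case True then show ?thesis by simp
  next
    case False
    obtain i where i: "i \<in> C k" using Cne kk by blast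
    obtain j where j: "j \<in> C k'" using Cne kk by blast
    have ij: "i < n" "j < n" using Cne kk i j by blast+
    have inej: "i \<noteq> j" using Cdisj kk False i j by blast
    have eqlam: "xstar n r a lam i = xstar n r a lam j" using XL' kk i j by metis
    define E where "E = {m. 0 \<le> m \<and> xstar n r a m i = xstar n r a m j}"
    have lamE: "lam \<in> E" unfolding E_def using lam0 eqlam by simp
    define m0 where "m0 = Inf E"
    have m0E: "m0 \<in> E" unfolding m0_def E_def by (rule inf_in_E[OF rpos ij lamE[unfolded E_def]])
    have bdd: "bdd_below E" unfolding E_def by (rule bdd_belowI[of _ 0]) auto
    have m0low: "m0 \<le> m" if "m \<in> E" for m unfolding m0_def using that bdd by (rule cInf_lower)
    show ?thesis
    proof (cases "m0 = 0")
      case True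
      then have "xstar n r a 0 i = xstar n r a 0 j" using m0E unfolding E_def by simp
      then have aij: "a i = a j" using xstar_zero[OF rpos, of a] ij by metis
      show ?thesis
      proof (cases "L1 = 0")
        case True
        have "C k = {i}" "C k' = {j}" using charzero[OF True] kk i j by auto
        moreover have "r i > 0" "r j > 0" using rpos ij by auto
        then have "abar r a {i} = a i" "abar r a {j} = a j"
          by (simp_all add: abar_def rprime_def)
        ultimately show ?thesis using aij unfolding a'_def by simp
      next
        case False
        then have L1p: "L1 > 0" using L1b by simp
        have "xstar n r a 0 i = xstar n r a 0 j" using \<open>xstar n r a 0 i = xstar n r a 0 j\<close> .
        then have "xstar n r a L1 i = xstar n r a L1 j"
          by (rule nosplit[OF rpos order_refl L1b(1) ij])
        then show ?thesis using sep[OF L1p kk(1,2) \<open>k \<noteq> k'\<close> i j] by simp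
      qed
    next
      case False
      have m0pos: "m0 > 0" using False m0E unfolding E_def by simp
      have m0eq: "xstar n r a m0 i = xstar n r a m0 j" using m0E unfolding E_def by simp
      have below: "\<forall>m. 0 \<le> m \<and> m < m0 \<longrightarrow> xstar n r a m i \<noteq> xstar n r a m j"
      proof (intro allI impI)
        fix m assume m: "0 \<le> m \<and> m < m0"
        show "xstar n r a m i \<noteq> xstar n r a m j"
        proof
          assume "xstar n r a m i = xstar n r a m j"
          then have "m \<in> E" using m unfolding E_def by simp
          then show False using m0low m by fastforce
        qed
      qed
      have fv: "fusion_value n r a m0"
        unfolding fusion_value_def using m0pos ij inej m0eq below by blast
      have "m0 \<noteq> lam" using fv notfus by blast
      moreover have "m0 \<le> lam" using m0low[OF lamE] .
      ultimately have "m0 < lam" by simp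
      then have L1p: "0 < L1" and m0L: "m0 \<le> L1" using lam1_props(2)[OF lampos fv] unfolding L1_def by auto
      have "xstar n r a L1 i = xstar n r a L1 j"
        by (rule nosplit[OF rpos less_imp_le[OF m0pos] m0L ij m0eq])
      then show ?thesis using sep[OF L1p kk(1,2) \<open>k \<noteq> k'\<close> i j] by simp
    qed
  qed
  define U where "U k' k = (lam / norm (xh k' - xh k)) *\<^sub>R (xh k' - xh k)" for k' k
  define V where "V k = (\<Sum>k'<K. r' k' *\<^sub>R U k' k)" for k
  have antiU: "anti dR k k' = U k' k" if "k < K" "k' < K" "xh k' \<noteq> xh k" for k k'
  proof -
    have "k \<noteq> k'" using that by auto
    then have "norm (anti dR k k') \<le> lam \<and> lam * norm (xh k' - xh k) \<le> anti dR k k' \<bullet> (xh k' - xh k)"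
      using anti_dR_bounds[OF cH] that by blast
    then show ?thesis unfolding U_def using that by (intro unit_eq) auto
  qed
  have U0: "U k' k = 0" if "xh k' = xh k" for k k' using that by (simp add: U_def)
  define G where "G k = {k'. k' < K \<and> xh k' = xh k}" for k
  define c where "c k = (\<Sum>k'\<in>G k. r' k' *\<^sub>R anti dR k k')" for k
  have Gsub: "G k \<subseteq> {..<K}" for k unfolding G_def by auto
  have finG: "finite (G k)" for k using Gsub finite_subset by blast
  have split: "xh k - a' k = c k + V k" if k: "k < K" for k
  proof -
    have "xh k - a' k = wv K r' dR k" using cH k unfolding cert_def by blast
    also have "\<dots> = (\<Sum>k'\<in>{..<K} - G k. r' k' *\<^sub>R anti dR k k') + c k"
      unfolding wv_def c_def by (rule sum.subset_diff[OF Gsub]) simp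
    also have "(\<Sum>k'\<in>{..<K} - G k. r' k' *\<^sub>R anti dR k k') = V k"
    proof -
      have "V k = (\<Sum>k'\<in>{..<K} - G k. r' k' *\<^sub>R U k' k) + (\<Sum>k'\<in>G k. r' k' *\<^sub>R U k' k)"
        unfolding V_def by (rule sum.subset_diff[OF Gsub]) simp
      also have "(\<Sum>k'\<in>G k. r' k' *\<^sub>R U k' k) = 0"
        by (rule sum.neutral) (auto simp: G_def U0)
      also have "(\<Sum>k'\<in>{..<K} - G k. r' k' *\<^sub>R U k' k) = (\<Sum>k'\<in>{..<K} - G k. r' k' *\<^sub>R anti dR k k')"
        using k by (intro sum.cong refl) (auto simp: G_def antiU)
      finally show ?thesis by simp
    qed
    finally show ?thesis by (simp add: add.commute)
  qed
  have kkt: "xh k0 - a' k0 = V k0" if k0: "k0 < K" for k0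
  proof -
    have Gk: "G k = G k0" if "k \<in> G k0" for k using that unfolding G_def by auto
    have Vk: "V k = V k0" if "k \<in> G k0" for k using that unfolding G_def V_def U_def by simp
    have ck: "c k = c k0" if kG: "k \<in> G k0" for k
    proof -
      have kK: "k < K" and xk: "xh k = xh k0" using kG unfolding G_def by auto
      have "c k = xh k - a' k - V k" using split[OF kK] by simp
      also have "\<dots> = xh k0 - a' k0 - V k0" using xk Vk[OF kG] dist[OF kK k0 xk] by simp
      also have "\<dots> = c k0" using split[OF k0] by simp
      finally show ?thesis .
    qed
    have "(\<Sum>k\<in>G k0. \<Sum>k'\<in>G k0. (r' k * r' k') *\<^sub>R anti dR k k') = 0" by (rule antisym_zero)
    moreover have "(\<Sum>k\<in>G k0. \<Sum>k'\<in>G k0. (r' k * r' k') *\<^sub>R anti dR k k') = (\<Sum>k\<in>G k0. r' k *\<^sub>R c k)"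
    proof (intro sum.cong refl)
      fix k assume "k \<in> G k0"
      then show "(\<Sum>k'\<in>G k0. (r' k * r' k') *\<^sub>R anti dR k k') = r' k *\<^sub>R c k"
        unfolding c_def using Gk by (simp add: scaleR_sum_right)
    qed
    moreover have "(\<Sum>k\<in>G k0. r' k *\<^sub>R c k) = (\<Sum>k\<in>G k0. r' k) *\<^sub>R c k0"
      using ck by (simp add: scaleR_sum_left)
    ultimately have z: "(\<Sum>k\<in>G k0. r' k) *\<^sub>R c k0 = 0" by simp
    have "(\<Sum>k\<in>G k0. r' k) > 0"
    proof (rule sum_pos2[OF finG])
      show "k0 \<in> G k0" using k0 unfolding G_def by simp
      show "0 < r' k0" using r'pos k0 by simp
      show "\<And>i. i \<in> G k0 \<Longrightarrow> 0 \<le> r' i" using r'pos unfolding G_def by (auto simp: less_imp_le)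
    qed
    then have "c k0 = 0" using z by simp
    then show ?thesis using split[OF k0] by simp
  qed
  have same_iff: "(\<exists>k<K. i \<in> C k \<and> j \<in> C k) \<longleftrightarrow> cl i = cl j" if "i < n" "j < n" for i j
    using clP clU that by metis
  have deltaF: "delta i j = lam *\<^sub>R ((1 / norm (xs j - xs i)) *\<^sub>R (xs j - xs i))"
    if nc: "\<not> (\<exists>k<K. i \<in> C k \<and> j \<in> C k)" for i j
  proof -
    have "delta i j = (if (\<exists>k<K. i \<in> C k \<and> j \<in> C k) then dp i j
                       else lam *\<^sub>R ((1 / norm (xs j - xs i)) *\<^sub>R (xs j - xs i)))" unfolding delta_def by (rule refl)
    then show ?thesis using nc by (simp only: if_not_P if_False)
  qed
  have deltaT: "delta i j = dp i j" if c: "\<exists>k<K. i \<in> C k \<and> j \<in> C k" for i j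
  proof -
    have "delta i j = (if (\<exists>k<K. i \<in> C k \<and> j \<in> C k) then dp i j
                       else lam *\<^sub>R ((1 / norm (xs j - xs i)) *\<^sub>R (xs j - xs i)))" unfolding delta_def by (rule refl)
    then show ?thesis using c by (simp only: if_P if_True)
  qed
  have deltaU: "delta i j = U (cl j) (cl i)" if "i < n" "j < n" "cl i \<noteq> cl j" for i j
  proof -
    have nc: "\<not> (\<exists>k<K. i \<in> C k \<and> j \<in> C k)" using same_iff[OF that(1,2)] that(3) by blast
    have "delta i j = lam *\<^sub>R ((1 / norm (xs j - xs i)) *\<^sub>R (xs j - xs i))" by (rule deltaF[OF nc])
    then show ?thesis unfolding U_def using xsc that by simp
  qed
  have dual_eq: "(\<Sum>j<n. r j *\<^sub>R anti delta i j) + beta i = 0" if i: "i < n" for i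
  proof -
    define k where "k = cl i"
    have k: "k < K" "i \<in> C k" using clP[OF i] unfolding k_def by auto
    have ad: "\<forall>k'<K. \<forall>j\<in>C k'. anti delta i j = (if k = k' then anti dp i j else U k' k)"
    proof (intro allI impI ballI)
      fix k' j assume k': "k' < K" and j: "j \<in> C k'"
      have jn: "j < n" using Cne k' j by blast
      have cj: "cl j = k'" using clU[OF k' j] .
      show "anti delta i j = (if k = k' then anti dp i j else U k' k)"
      proof (cases "k = k'")
        case True
        then have same: "\<exists>k<K. i \<in> C k \<and> j \<in> C k" "\<exists>k<K. j \<in> C k \<and> i \<in> C k"
          using k j k' by auto
        then show ?thesis using True deltaT[OF same(1)] deltaT[OF same(2)] unfolding anti_def by auto
      next
        case False
        then have ne: "i \<noteq> j" using cj k_def by auto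
        have d1: "delta i j = U k' k" using deltaU[OF i jn] cj False k_def by simp
        have d2: "delta j i = U k k'" using deltaU[OF jn i] cj False k_def by simp
        have "U k k' = - U k' k" unfolding U_def by (simp add: norm_minus_commute scaleR_diff_right)
        then show ?thesis using False ne d1 d2 unfolding anti_def by auto
      qed
    qed
    have "(\<Sum>j<n. r j *\<^sub>R anti delta i j) = (\<Sum>j\<in>C k. r j *\<^sub>R anti dp i j) + (\<Sum>k'<K. rprime r (C k') *\<^sub>R U k' k)"
      by (rule regroup[OF Cne Cdisj Cun k(1) _ ad]) (simp add: U_def)
    also have "\<dots> = (a' k - a i) + (xh k - a' k)"
    proof -
      have h: "a i - a' k = - (\<Sum>j\<in>C k. r j *\<^sub>R anti dp i j)" using dp_eq k unfolding a'_def by blast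
      have e1: "(\<Sum>j\<in>C k. r j *\<^sub>R anti dp i j) = - (a i - a' k)" using h by simp
      have e2: "(\<Sum>k'<K. rprime r (C k') *\<^sub>R U k' k) = xh k - a' k" using kkt[OF k(1)] unfolding V_def r'_def by simp
      show ?thesis unfolding e1 e2 by simp
    qed
    also have "\<dots> = xs i - a i" using xsc[OF i] k_def by simp
    finally show ?thesis unfolding beta_def z_def by simp
  qed
  have dual_norm: "norm (delta i j) \<le> lam" if "i < n" "j < n" "i < j" for i j
  proof (cases "\<exists>k<K. i \<in> C k \<and> j \<in> C k")
    case True
    then have "norm (dp i j) \<le> L1" using dpb that by blast
    then show ?thesis using deltaT[OF True] L1b by simp
  next
    case False
    have "norm (lam *\<^sub>R ((1 / norm (xs j - xs i)) *\<^sub>R (xs j - xs i))) \<le> lam"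
      using lam0 by (cases "xs j - xs i = 0") auto
    then show ?thesis using deltaF[OF False] by simp
  qed
  have dual_cone: "norm (beta i, gamma i) \<le> 1 - gamma i" for i
  proof -
    have e: "(norm (beta i))\<^sup>2 + (gamma i)\<^sup>2 = (1 - gamma i)\<^sup>2"
      unfolding gamma_def by (simp add: power2_eq_square algebra_simps)
    have p: "1 - gamma i \<ge> 0" unfolding gamma_def using zero_le_power2[of "norm (beta i)"] by (simp add: algebra_simps)
    have "norm (beta i, gamma i) = sqrt ((norm (beta i))\<^sup>2 + (norm (gamma i))\<^sup>2)" by (rule norm_Pair)
    also have "\<dots> = 1 - gamma i" using e p by simp
    finally show ?thesis by simp
  qed
  have dfeas: "dsocp_feasible n r lam delta beta gamma"
    unfolding dsocp_feasible_def using dual_eq dual_norm dual_cone by blast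
  have pfeas: "psocp_feasible n a xs y z s u t"
    unfolding psocp_feasible_def
  proof (intro conjI allI impI)
    fix i j assume "i < n" "j < n" "i < j"
    show "y i j = xs i - xs j" by (simp add: y_def)
    show "norm (y i j) \<le> t i j" by (simp add: t_def)
  next
    fix i assume "i < n"
    show "z i = xs i - a i" by (simp add: z_def)
    show "s i = u i + 1" by (simp add: s_def u_def algebra_simps)
    have e: "(norm (z i))\<^sup>2 + (u i)\<^sup>2 = (s i)\<^sup>2"
      unfolding s_def u_def by (simp add: power2_eq_square algebra_simps)
    have p: "s i \<ge> 0" unfolding s_def using zero_le_power2[of "norm (z i)"] by simp
    have "norm (z i, u i) = sqrt ((norm (z i))\<^sup>2 + (norm (u i))\<^sup>2)" by (rule norm_Pair)
    also have "\<dots> = s i" using e p by simp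
    finally show "norm (z i, u i) \<le> s i" by simp
  qed
  have pair: "delta i j \<bullet> (xs i - xs j) = - (lam * norm (xs i - xs j))" if ij: "i < n" "j < n" for i j
  proof (cases "cl i = cl j")
    case True
    then have "xs i = xs j" using xsc ij by simp
    then show ?thesis by simp
  next
    case False
    have d: "delta i j = U (cl j) (cl i)" using deltaU[OF ij False] .
    have v: "xs j - xs i = xh (cl j) - xh (cl i)" using xsc ij by simp
    show ?thesis
    proof (cases "xs j - xs i = 0")
      case True then show ?thesis using d v by (simp add: U_def)
    next
      case nz: False
      have d': "delta i j = (lam / norm (xs j - xs i)) *\<^sub>R (xs j - xs i)" using d v unfolding U_def by simp
      have m: "(xs j - xs i) \<bullet> (xs i - xs j) = - ((xs j - xs i) \<bullet> (xs j - xs i))"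
        by (metis inner_minus_right minus_diff_eq)
      have "delta i j \<bullet> (xs i - xs j) = - ((lam / norm (xs j - xs i)) * ((xs j - xs i) \<bullet> (xs j - xs i)))"
        unfolding d' inner_scaleR_left m by simp
      also have "(xs j - xs i) \<bullet> (xs j - xs i) = (norm (xs j - xs i))\<^sup>2" by (simp add: power2_norm_eq_inner)
      finally show ?thesis using nz by (simp add: power2_eq_square norm_minus_commute)
    qed
  qed
  have zw: "z i = wv n r delta i" if "i < n" for i
    using dual_eq[OF that] unfolding wv_def beta_def by (simp add: add_eq_0_iff)
  have obj_eq: "psocp_obj n r lam s t = dsocp_obj n r a beta gamma"
  proof -
    have "(\<Sum>i<n. r i * (xs i \<bullet> z i)) = (\<Sum>i<n. r i * (xs i \<bullet> wv n r delta i))"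
      using zw by (intro sum.cong refl) simp
    also have "\<dots> = (\<Sum>i<n. \<Sum>j\<in>{i<..<n}. r i * r j * (delta i j \<bullet> (xs i - xs j)))"
      by (rule anti_sum_identity)
    also have "\<dots> = (\<Sum>i<n. \<Sum>j\<in>{i<..<n}. - lam * (r i * r j * t i j))"
    proof (intro sum.cong refl)
      fix i j assume "i \<in> {..<n}" "j \<in> {i<..<n}"
      then have "i < n" "j < n" by auto
      then show "r i * r j * (delta i j \<bullet> (xs i - xs j)) = - lam * (r i * r j * t i j)"
        using pair[of i j] by (simp add: t_def y_def)
    qed
    also have "\<dots> = - lam * (\<Sum>i<n. \<Sum>j\<in>{i<..<n}. r i * r j * t i j)"
      by (simp add: sum_distrib_left)
    finally have h1: "(\<Sum>i<n. r i * (xs i \<bullet> z i)) = - lam * (\<Sum>i<n. \<Sum>j\<in>{i<..<n}. r i * r j * t i j)" .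
    have h2: "(\<Sum>i<n. r i * s i) - (\<Sum>i<n. r i * (a i \<bullet> beta i)) - (\<Sum>i<n. r i * gamma i) = (\<Sum>i<n. r i * (xs i \<bullet> z i))"
    proof -
      have "r i * s i - r i * (a i \<bullet> beta i) - r i * gamma i = r i * (xs i \<bullet> z i)" for i
      proof -
        have "xs i = z i + a i" by (simp add: z_def)
        then have "xs i \<bullet> z i = (norm (z i))\<^sup>2 + a i \<bullet> z i"
          by (simp add: inner_add_left power2_norm_eq_inner)
        then show ?thesis unfolding s_def gamma_def beta_def by (simp add: algebra_simps)
      qed
      then show ?thesis by (simp add: sum_subtractf[symmetric])
    qed
    show ?thesis unfolding psocp_obj_def dsocp_obj_def using h1 h2 by (simp add: algebra_simps)
  qed
  have "psocp_optimal n r a lam xs y z s u t"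
    unfolding psocp_optimal_def
    using pfeas obj_eq weak_duality[OF rpos lam0 _ dfeas] by auto
  moreover have "dsocp_optimal n r a lam delta beta gamma"
    unfolding dsocp_optimal_def
    using dfeas obj_eq weak_duality[OF rpos lam0 pfeas] by auto
  ultimately show ?thesis by blast
qed

end
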